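(* Let $F(\lambda)$, $\lambda\in(\sigma,\tau)$, satisfy the standing assumptions (A1)–(A3) below. Suppose there is a family of quadratic forms $\mathfrak f(\lambda)[y]$, $\lambda\in(\sigma,\tau)$, such that: (i) for every $\lambda_0\in(\sigma,\tau)$, $\mathfrak f(\lambda_0)$ is the closure of the form $y\mapsto\langle F(\lambda_0)y,y\rangle_{\mathfrak H}$ defined on $\mathfrak D(F(\lambda_0))$; (ii) the domain of $\mathfrak f(\lambda_0)$ is a subspace $\mathfrak D(\mathfrak f)$ independent of $\lambda_0$; (iii) for all $\lambda_1<\lambda_2$ in $(\sigma,\tau)$ the form $\mathfrak f(\lambda_1)[y]-\mathfrak f(\lambda_2)[y]$ on $\mathfrak D(\mathfrak f)$ is positive (strictly positive for $y\neq 0$). Then for every half-open interval $[\xi_1,\xi_2)$ with $[\xi_1,\xi_2]\subset(\sigma,\tau)$, \[ \mathcal N_F(\xi_1,\xi_2)=\nu_F(\xi_2)-\nu_F(\xi_1). \]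
   Context: Standing assumptions on $F$: (A1) for every $\lambda_0\in(\sigma,\tau)$, $F(\lambda_0)$ is a self-adjoint operator in a Hilbert space $\mathfrak H$ with compact resolvent; (A2) for every $\lambda_0\in(\sigma,\tau)$ there exist a real $\mu$ and a neighbourhood $\mathcal U(\lambda_0)$ with compact closure in $(\sigma,\tau)$ such that $F(\lambda_1)-\mu\geqslant 0$ for all $\lambda_1\in\mathcal U(\lambda_0)$; (A3) $\lambda\mapsto (F(\lambda)-i)^{-1}$ is continuous on $(\sigma,\tau)$ in the operator norm. A number $\lambda_0$ is an eigenvalue of multiplicity $m$ of $F$ if $0$ is an eigenvalue of multiplicity $m$ of $F(\lambda_0)$. $\mathcal N_F(\xi_1,\xi_2)$ is the number of eigenvalues of $F$ in $[\xi_1,\xi_2)$ counted with multiplicity; $\nu_F(\lambda_0)$ is the number of negative eigenvalues of $F(\lambda_0)$ counted with multiplicity. Closure of a quadratic form is in the sense of Kato's perturbation theory. *)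

theory Defs
  imports "HOL-Analysis.Analysis"
begin

text \<open>A complex Hilbert space is modelled by a type 'h of class banach (complete real
normed space, giving norm, limits, closure, compactness) together with a complex
scalar multiplication sc extending the real one and a complex inner product ip
(linear in the first, conjugate linear in the second argument) whose induced norm
is the norm of the type.\<close>

definition complex_hilbert ::
  "(complex \<Rightarrow> 'h::banach \<Rightarrow> 'h) \<Rightarrow> ('h \<Rightarrow> 'h \<Rightarrow> complex) \<Rightarrow> bool" where
  "complex_hilbert sc ip \<longleftrightarrow>
     Vector_Spaces.vector_space sc \<and>
     (\<forall>r x. sc (complex_of_real r) x = r *\<^sub>R x) \<and>
     (\<forall>x y z. ip (x + y) z = ip x z + ip y z) \<and>
     (\<forall>c x y. ip (sc c x) y = c * ip x y) \<and>
     (\<forall>x y. ip y x = cnj (ip x y)) \<and>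
     (\<forall>x. ip x x = complex_of_real ((norm x)\<^sup>2))"

definition linear_on :: "(complex \<Rightarrow> 'h::banach \<Rightarrow> 'h) \<Rightarrow> 'h set \<Rightarrow> ('h \<Rightarrow> 'h) \<Rightarrow> bool" where
  "linear_on sc D T \<longleftrightarrow> module.subspace sc D \<and>
     (\<forall>x\<in>D. \<forall>y\<in>D. T (x + y) = T x + T y) \<and>
     (\<forall>c. \<forall>x\<in>D. T (sc c x) = sc c (T x))"

definition self_adjoint ::
  "(complex \<Rightarrow> 'h::banach \<Rightarrow> 'h) \<Rightarrow> ('h \<Rightarrow> 'h \<Rightarrow> complex) \<Rightarrow> 'h set \<Rightarrow> ('h \<Rightarrow> 'h) \<Rightarrow> bool" where
  "self_adjoint sc ip D T \<longleftrightarrow>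
     linear_on sc D T \<and> closure D = UNIV \<and>
     (\<forall>x\<in>D. \<forall>y\<in>D. ip (T x) y = ip x (T y)) \<and>
     (\<forall>y z. (\<forall>x\<in>D. ip (T x) y = ip x z) \<longrightarrow> y \<in> D \<and> T y = z)"

definition in_resolvent_set ::
  "(complex \<Rightarrow> 'h::banach \<Rightarrow> 'h) \<Rightarrow> 'h set \<Rightarrow> ('h \<Rightarrow> 'h) \<Rightarrow> complex \<Rightarrow> bool" where
  "in_resolvent_set sc D T z \<longleftrightarrow> (\<forall>y. \<exists>!x. x \<in> D \<and> T x - sc z x = y) \<and>
     bounded ((\<lambda>y. THE x. x \<in> D \<and> T x - sc z x = y) ` cball 0 1)"

definition resolvent ::
  "(complex \<Rightarrow> 'h::banach \<Rightarrow> 'h) \<Rightarrow> 'h set \<Rightarrow> ('h \<Rightarrow> 'h) \<Rightarrow> complex \<Rightarrow> 'h \<Rightarrow> 'h" where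
  "resolvent sc D T z = (\<lambda>y. THE x. x \<in> D \<and> T x - sc z x = y)"

definition compact_operator :: "('h::banach \<Rightarrow> 'h) \<Rightarrow> bool" where
  "compact_operator R \<longleftrightarrow> compact (closure (R ` cball 0 1))"

definition compact_resolvent ::
  "(complex \<Rightarrow> 'h::banach \<Rightarrow> 'h) \<Rightarrow> 'h set \<Rightarrow> ('h \<Rightarrow> 'h) \<Rightarrow> bool" where
  "compact_resolvent sc D T \<longleftrightarrow>
     (\<exists>z. in_resolvent_set sc D T z \<and> compact_operator (resolvent sc D T z))"

definition eig_mult ::
  "(complex \<Rightarrow> 'h::banach \<Rightarrow> 'h) \<Rightarrow> 'h set \<Rightarrow> ('h \<Rightarrow> 'h) \<Rightarrow> real \<Rightarrow> nat" where
  "eig_mult sc D T mu = vector_space.dim sc {x \<in> D. T x = sc (complex_of_real mu) x}"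

definition is_eigenvalue ::
  "(complex \<Rightarrow> 'h::banach \<Rightarrow> 'h) \<Rightarrow> 'h set \<Rightarrow> ('h \<Rightarrow> 'h) \<Rightarrow> real \<Rightarrow> bool" where
  "is_eigenvalue sc D T mu \<longleftrightarrow> (\<exists>x\<in>D. x \<noteq> 0 \<and> T x = sc (complex_of_real mu) x)"

text \<open>N_F(xi1,xi2): number of eigenvalues of F in [xi1,xi2) counted with multiplicity;
lambda is an eigenvalue of F of multiplicity m iff 0 is an eigenvalue of multiplicity m of F(lambda).\<close>
definition N_F ::
  "(complex \<Rightarrow> 'h::banach \<Rightarrow> 'h) \<Rightarrow> (real \<Rightarrow> 'h set) \<Rightarrow> (real \<Rightarrow> 'h \<Rightarrow> 'h) \<Rightarrow> real \<Rightarrow> real \<Rightarrow> nat" where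
  "N_F sc D T xi1 xi2 =
     (\<Sum>l\<in>{l. xi1 \<le> l \<and> l < xi2 \<and> is_eigenvalue sc (D l) (T l) 0}. eig_mult sc (D l) (T l) 0)"

definition nu_F ::
  "(complex \<Rightarrow> 'h::banach \<Rightarrow> 'h) \<Rightarrow> (real \<Rightarrow> 'h set) \<Rightarrow> (real \<Rightarrow> 'h \<Rightarrow> 'h) \<Rightarrow> real \<Rightarrow> nat" where
  "nu_F sc D T l =
     (\<Sum>mu\<in>{mu. mu < 0 \<and> is_eigenvalue sc (D l) (T l) mu}. eig_mult sc (D l) (T l) mu)"

definition standing_assumptions ::
  "(complex \<Rightarrow> 'h::banach \<Rightarrow> 'h) \<Rightarrow> ('h \<Rightarrow> 'h \<Rightarrow> complex) \<Rightarrow> ereal \<Rightarrow> ereal \<Rightarrow>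
   (real \<Rightarrow> 'h set) \<Rightarrow> (real \<Rightarrow> 'h \<Rightarrow> 'h) \<Rightarrow> bool" where
  "standing_assumptions sc ip \<sigma> \<tau> D T \<longleftrightarrow>
     (let I = {l. \<sigma> < ereal l \<and> ereal l < \<tau>} in
     \<comment> \<open>(A1)\<close>
     (\<forall>l\<in>I. self_adjoint sc ip (D l) (T l) \<and> compact_resolvent sc (D l) (T l)) \<and>
     \<comment> \<open>(A2)\<close>
     (\<forall>l0\<in>I. \<exists>mu::real. \<exists>U. open U \<and> l0 \<in> U \<and> compact (closure U) \<and> closure U \<subseteq> I \<and>
        (\<forall>l1\<in>U. \<forall>x\<in>D l1. 0 \<le> Re (ip (T l1 x - sc (complex_of_real mu) x) x))) \<and>
     \<comment> \<open>(A3): continuity of (F(l) - i)^(-1) in operator norm\<close>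
     (\<forall>l0\<in>I. ((\<lambda>l. onorm (\<lambda>y. resolvent sc (D l) (T l) \<i> y - resolvent sc (D l0) (T l0) \<i> y))
                \<longlongrightarrow> 0) (at l0 within I)))"

definition form_convergent :: "'h set \<Rightarrow> ('h::banach \<Rightarrow> real) \<Rightarrow> (nat \<Rightarrow> 'h) \<Rightarrow> 'h \<Rightarrow> bool" where
  "form_convergent D q s u \<longleftrightarrow> (\<forall>n. s n \<in> D) \<and> s \<longlonglongrightarrow> u \<and>
     (\<forall>e>0. \<exists>N. \<forall>m\<ge>N. \<forall>n\<ge>N. \<bar>q (s m - s n)\<bar> < e)"

definition is_form_closure :: "'h set \<Rightarrow> ('h::banach \<Rightarrow> real) \<Rightarrow> 'h set \<Rightarrow> ('h \<Rightarrow> real) \<Rightarrow> bool" where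
  "is_form_closure D q Df f \<longleftrightarrow>
     Df = {u. \<exists>s. form_convergent D q s u} \<and>
     (\<forall>u s. form_convergent D q s u \<longrightarrow> (\<lambda>n. q (s n)) \<longlonglongrightarrow> f u)"

end

theory Submission
  imports Defs
begin

locale chs =
  fixes sc :: "complex \<Rightarrow> 'h::banach \<Rightarrow> 'h" and ip :: "'h \<Rightarrow> 'h \<Rightarrow> complex"
  assumes hil: "complex_hilbert sc ip"
begin

lemma vs: "Vector_Spaces.vector_space sc" using hil unfolding complex_hilbert_def by blast

sublocale V: vector_space sc by (rule vs)

lemma sc_real: "sc (complex_of_real r) x = r *\<^sub>R x" using hil unfolding complex_hilbert_def by blast
lemma ip_add_left: "ip (x + y) z = ip x z + ip y z" using hil unfolding complex_hilbert_def by blast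
lemma ip_sc_left: "ip (sc c x) y = c * ip x y" using hil unfolding complex_hilbert_def by blast
lemma ip_cnj: "ip x y = cnj (ip y x)" using hil unfolding complex_hilbert_def by blast
lemma cnj_ip: "cnj (ip y x) = ip x y" by (simp add: ip_cnj[of x y])
lemma ip_self: "ip x x = complex_of_real ((norm x)\<^sup>2)" using hil unfolding complex_hilbert_def by blast

lemma ip_add_right: "ip x (y + z) = ip x y + ip x z"
proof -
  have "ip x (y + z) = cnj (ip (y + z) x)" by (rule ip_cnj)
  also have "\<dots> = cnj (ip y x) + cnj (ip z x)" by (simp add: ip_add_left)
  finally show ?thesis by (simp add: cnj_ip)
qed
lemma ip_sc_right: "ip x (sc c y) = cnj c * ip x y"
proof -
  have "ip x (sc c y) = cnj (ip (sc c y) x)" by (rule ip_cnj)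
  also have "\<dots> = cnj c * cnj (ip y x)" by (simp add: ip_sc_left)
  finally show ?thesis by (simp add: cnj_ip)
qed
lemma ip_zero_left[simp]: "ip 0 y = 0"
  using ip_add_left[of 0 0 y] by simp
lemma ip_zero_right[simp]: "ip y 0 = 0"
  using ip_add_right[of y 0 0] by simp
lemma ip_minus_left: "ip (- x) y = - ip x y"
  using ip_add_left[of x "-x" y] by (simp add: neg_eq_iff_add_eq_0[symmetric])
lemma ip_minus_right: "ip y (- x) = - ip y x"
  using ip_add_right[of y x "-x"] by (simp add: neg_eq_iff_add_eq_0[symmetric])
lemma ip_diff_left: "ip (x - y) z = ip x z - ip y z"
  using ip_add_left[of x "-y" z] ip_minus_left by simp
lemma ip_diff_right: "ip z (x - y) = ip z x - ip z y"
  using ip_add_right[of z x "-y"] ip_minus_right by simp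
lemma ip_scaleR_left: "ip (r *\<^sub>R x) y = of_real r * ip x y"
  using ip_sc_left[of "complex_of_real r" x y] by (simp add: sc_real)
lemma ip_scaleR_right: "ip x (r *\<^sub>R y) = of_real r * ip x y"
  using ip_sc_right[of x "complex_of_real r" y] by (simp add: sc_real)
lemma ip_sum_left: "ip (sum f S) y = (\<Sum>a\<in>S. ip (f a) y)"
  by (induction S rule: infinite_finite_induct) (auto simp: ip_add_left)
lemma ip_sum_right: "ip y (sum f S) = (\<Sum>a\<in>S. ip y (f a))"
  by (induction S rule: infinite_finite_induct) (auto simp: ip_add_right)

lemma Re_ip_self: "Re (ip x x) = (norm x)\<^sup>2" by (simp add: ip_self)
lemma Im_ip_self: "Im (ip x x) = 0" by (simp add: ip_self)
lemma Re_ip_sym: "Re (ip y x) = Re (ip x y)" by (simp add: ip_cnj[of y x])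

lemma norm_add_sq: "(norm (x + y))\<^sup>2 = (norm x)\<^sup>2 + 2 * Re (ip x y) + (norm y)\<^sup>2"
proof -
  have "(norm (x + y))\<^sup>2 = Re (ip (x+y) (x+y))" by (simp add: Re_ip_self)
  also have "\<dots> = Re (ip x x) + Re (ip x y) + Re (ip y x) + Re (ip y y)"
    by (simp add: ip_add_left ip_add_right)
  finally show ?thesis by (simp add: Re_ip_self Re_ip_sym)
qed

lemma norm_diff_sq: "(norm (x - y))\<^sup>2 = (norm x)\<^sup>2 - 2 * Re (ip x y) + (norm y)\<^sup>2"
  using norm_add_sq[of x "-y"] by (simp add: ip_minus_right)

lemma Re_ip_le: "Re (ip x y) \<le> norm x * norm y"
proof -
  have "norm (x + y) \<le> norm x + norm y" by (rule norm_triangle_ineq)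
  hence "(norm (x + y))\<^sup>2 \<le> (norm x + norm y)\<^sup>2" by (simp add: power_mono)
  thus ?thesis by (simp add: norm_add_sq power2_sum)
qed

lemma abs_Re_ip_le: "\<bar>Re (ip x y)\<bar> \<le> norm x * norm y"
  using Re_ip_le[of x y] Re_ip_le[of x "-y"] by (simp add: ip_minus_right)

lemma norm_sc: "norm (sc c x) = cmod c * norm x"
proof -
  have "ip (sc c x) (sc c x) = (c * cnj c) * ip x x" by (simp add: ip_sc_left ip_sc_right)
  also have "\<dots> = complex_of_real ((cmod c * norm x)\<^sup>2)"
    by (simp add: complex_norm_square[symmetric] ip_self power_mult_distrib)
  finally have "(norm (sc c x))\<^sup>2 = (cmod c * norm x)\<^sup>2" by (metis Re_complex_of_real Re_ip_self)
  thus ?thesis by (simp add: power2_eq_iff_nonneg)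
qed

lemma cmod_ip_le: "cmod (ip x y) \<le> norm x * norm y"
proof (cases "ip x y = 0")
  case True thus ?thesis by simp
next
  case False
  define z where "z = ip x y"
  define c where "c = cnj z / complex_of_real (cmod z)"
  have cm: "cmod c = 1" using False by (simp add: c_def norm_divide z_def)
  have "ip (sc c x) y = cnj z * z / complex_of_real (cmod z)"
    by (simp add: ip_sc_left c_def z_def)
  also have "\<dots> = complex_of_real (cmod z)"
  proof -
    have "cnj z * z = complex_of_real (cmod z * cmod z)"
      using complex_norm_square[of z] by (simp add: mult.commute power2_eq_square)
    moreover have "cmod z \<noteq> 0" using False z_def by simp
    ultimately show ?thesis by simp
  qed
  finally have "cmod (ip x y) = Re (ip (sc c x) y)" by (simp add: z_def)
  also have "\<dots> \<le> norm (sc c x) * norm y" by (rule Re_ip_le)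
  finally show ?thesis by (simp add: norm_sc cm)
qed

lemma sc_add: "sc c (x + y) = sc c x + sc c y" by (rule V.scale_right_distrib)
lemma sc_add_left: "sc (a + b) x = sc a x + sc b x" by (rule V.scale_left_distrib)
lemma sc_zero[simp]: "sc c 0 = 0" by simp
lemma sc_zero_left[simp]: "sc 0 x = 0" by simp
lemma sc_minus: "sc c (- x) = - sc c x" by (rule V.scale_minus_right)
lemma sc_diff: "sc c (x - y) = sc c x - sc c y" by (rule V.scale_right_diff_distrib)
lemma sc_one[simp]: "sc 1 x = x" by simp
lemma sc_sc[simp]: "sc a (sc b x) = sc (a * b) x" by simp

lemma bounded_linear_sc: "bounded_linear (sc c)"
proof (rule bounded_linear_intro[of _ "cmod c"])
  show "sc c (x + y) = sc c x + sc c y" for x y by (rule sc_add)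
  show "sc c (r *\<^sub>R x) = r *\<^sub>R sc c x" for r x
    by (metis sc_real sc_sc mult.commute)
  show "norm (sc c x) \<le> norm x * cmod c" for x by (simp add: norm_sc mult.commute)
qed

lemma bounded_bilinear_ip: "bounded_bilinear ip"
proof (rule bounded_bilinear.intro)
  show "ip (a + a') b = ip a b + ip a' b" for a a' b by (rule ip_add_left)
  show "ip a (b + b') = ip a b + ip a b'" for a b b' by (rule ip_add_right)
  show "ip (r *\<^sub>R a) b = r *\<^sub>R ip a b" for r a b by (simp add: ip_scaleR_left scaleR_conv_of_real)
  show "ip a (r *\<^sub>R b) = r *\<^sub>R ip a b" for r a b by (simp add: ip_scaleR_right scaleR_conv_of_real)
  show "\<exists>K. \<forall>a b. norm (ip a b) \<le> norm a * norm b * K"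
    by (rule exI[of _ 1]) (simp add: cmod_ip_le)
qed

lemma tendsto_ip[tendsto_intros]:
  "(f \<longlongrightarrow> a) F \<Longrightarrow> (g \<longlongrightarrow> b) F \<Longrightarrow> ((\<lambda>x. ip (f x) (g x)) \<longlongrightarrow> ip a b) F"
  by (rule bounded_bilinear.tendsto[OF bounded_bilinear_ip])

lemma tendsto_sc[tendsto_intros]:
  "(f \<longlongrightarrow> a) F \<Longrightarrow> ((\<lambda>x. sc c (f x)) \<longlongrightarrow> sc c a) F"
  by (rule bounded_linear.tendsto[OF bounded_linear_sc])

lemma sc_i_Re: "Re (ip x (sc \<i> y)) = Im (ip x y)"
  by (simp add: ip_sc_right)

lemma ip_eq_zero_iff: "ip x x = 0 \<longleftrightarrow> x = 0"
  by (simp add: ip_self)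

lemma norm_sq_Re: "(norm x)\<^sup>2 = Re (ip x x)" by (simp add: Re_ip_self)

end

lemma quad_zero:
  fixes b c :: real
  assumes "\<And>t. 0 \<le> b * t + c * t\<^sup>2"
  shows "b = 0"
proof (rule ccontr)
  assume b: "b \<noteq> 0"
  define k where "k = \<bar>c\<bar> + 1"
  have pos: "k > 0" "c - k < 0" by (auto simp: k_def)
  define t where "t = - b / k"
  have "b * t + c * t\<^sup>2 = b\<^sup>2 * (c - k) / k\<^sup>2"
    using pos by (simp add: t_def field_simps power2_eq_square)
  also have "\<dots> < 0" using b pos
    by (intro divide_neg_pos mult_pos_neg) auto
  finally show False using assms[of t] by simp
qed

lemma discr_le:
  fixes a b c :: real
  assumes "\<And>t. 0 \<le> a + 2 * b * t + c * t\<^sup>2" "0 \<le> a" "0 \<le> c"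
  shows "b\<^sup>2 \<le> a * c"
proof (cases "c = 0")
  case True
  have "b = 0"
  proof (rule ccontr)
    assume "b \<noteq> 0"
    hence "a + 2 * b * (- (a + 1) / (2 * b)) + c * (- (a + 1) / (2 * b))\<^sup>2 = -1"
      using True by (simp add: field_simps)
    thus False using assms(1)[of "- (a + 1) / (2 * b)"] by simp
  qed
  thus ?thesis using True by simp
next
  case False
  hence c: "c > 0" using assms by simp
  have "0 \<le> a + 2 * b * (- b / c) + c * (- b / c)\<^sup>2" by (rule assms(1))
  also have "\<dots> = a - b\<^sup>2 / c" using c by (simp add: field_simps power2_eq_square)
  finally have "b\<^sup>2 / c \<le> a" by simp
  thus ?thesis using c by (simp add: divide_le_eq mult.commute)
qed

lemma lim_one_over_Suc: "(\<lambda>n. 1 / real (Suc n)) \<longlonglongrightarrow> 0"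
  using LIMSEQ_inverse_real_of_nat by (simp add: inverse_eq_divide)

context chs
begin

definition lincomb :: "(nat \<Rightarrow> complex) \<Rightarrow> 'h list \<Rightarrow> 'h" where
  "lincomb c es = (\<Sum>j<length es. sc (c j) (es!j))"

definition orthonormal :: "'h list \<Rightarrow> bool" where
  "orthonormal es \<longleftrightarrow> (\<forall>i<length es. \<forall>j<length es. ip (es!i) (es!j) = (if i = j then 1 else 0))"

definition orth :: "'h list \<Rightarrow> 'h \<Rightarrow> bool" where
  "orth es y \<longleftrightarrow> (\<forall>e\<in>set es. ip y e = 0)"

definition proj :: "'h list \<Rightarrow> 'h \<Rightarrow> 'h" where
  "proj es y = lincomb (\<lambda>j. ip y (es!j)) es"

lemma orthonormal_norm:
  assumes "orthonormal es" "e \<in> set es" shows "norm e = 1"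
proof -
  obtain i where i: "i < length es" "e = es!i" using assms(2) by (auto simp: in_set_conv_nth)
  hence "ip e e = 1" using assms(1) by (simp add: orthonormal_def)
  hence "(norm e)\<^sup>2 = 1" by (metis Re_ip_self one_complex.sel(1))
  thus ?thesis using norm_ge_zero[of e] by (auto simp: power2_eq_1_iff)
qed

lemma ip_lincomb_left:
  assumes "orthonormal es" "k < length es"
  shows "ip (lincomb c es) (es!k) = c k"
proof -
  have "ip (lincomb c es) (es!k) = (\<Sum>j<length es. c j * ip (es!j) (es!k))"
    by (simp add: lincomb_def ip_sum_left ip_sc_left)
  also have "\<dots> = (\<Sum>j<length es. if j = k then c j else 0)"
    using assms by (intro sum.cong) (auto simp: orthonormal_def)
  also have "\<dots> = c k" using assms by simp
  finally show ?thesis .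
qed

lemma ip_lincomb_lincomb:
  assumes "orthonormal es"
  shows "ip (lincomb a es) (lincomb b es) = (\<Sum>j<length es. a j * cnj (b j))"
proof -
  have "ip (lincomb a es) (lincomb b es) = (\<Sum>j<length es. cnj (b j) * ip (lincomb a es) (es!j))"
    by (simp add: lincomb_def[of b] ip_sum_right ip_sc_right)
  also have "\<dots> = (\<Sum>j<length es. a j * cnj (b j))"
    using assms by (intro sum.cong) (auto simp: ip_lincomb_left)
  finally show ?thesis .
qed

lemma norm_lincomb_sq:
  assumes "orthonormal es"
  shows "(norm (lincomb c es))\<^sup>2 = (\<Sum>j<length es. (cmod (c j))\<^sup>2)"
proof -
  have "(norm (lincomb c es))\<^sup>2 = Re (\<Sum>j<length es. c j * cnj (c j))"
    using assms by (simp add: Re_ip_self[symmetric] ip_lincomb_lincomb)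
  also have "\<dots> = (\<Sum>j<length es. (cmod (c j))\<^sup>2)"
    by (simp add: Re_sum complex_mult_cnj cmod_power2)
  finally show ?thesis .
qed

lemma lincomb_eq_zero_iff:
  assumes "orthonormal es"
  shows "lincomb c es = 0 \<longleftrightarrow> (\<forall>j<length es. c j = 0)"
proof
  assume "lincomb c es = 0"
  thus "\<forall>j<length es. c j = 0" using ip_lincomb_left[OF assms] by (metis ip_zero_left)
next
  assume "\<forall>j<length es. c j = 0"
  thus "lincomb c es = 0" by (simp add: lincomb_def)
qed

lemma proj_orth:
  assumes "orthonormal es" "k < length es"
  shows "ip (y - proj es y) (es!k) = 0"
  using assms by (simp add: proj_def ip_diff_left ip_lincomb_left)

lemma orth_minus_proj: "orthonormal es \<Longrightarrow> orth es (y - proj es y)"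
  unfolding orth_def by (metis in_set_conv_nth proj_orth)

lemma lincomb_cong: "(\<And>j. j < length es \<Longrightarrow> a j = b j) \<Longrightarrow> lincomb a es = lincomb b es"
  unfolding lincomb_def by (intro sum.cong) auto

lemma orth_lincomb_zero:
  assumes "orthonormal es" "orth es y" "y = lincomb c es"
  shows "y = 0"
proof -
  have "\<forall>j<length es. c j = 0"
    using assms ip_lincomb_left by (metis nth_mem orth_def)
  thus ?thesis using assms lincomb_eq_zero_iff by blast
qed

lemma lincomb_in_subspace:
  assumes "V.subspace S" "set es \<subseteq> S"
  shows "lincomb c es \<in> S"
  unfolding lincomb_def using assms
  by (intro V.subspace_sum) (auto intro!: V.subspace_scale)

lemma lincomb_in_span: "lincomb c es \<in> V.span (set es)"
  unfolding lincomb_def by (intro V.span_sum V.span_scale V.span_base) simp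

lemma proj_lincomb:
  assumes "orthonormal es"
  shows "proj es (lincomb c es) = lincomb c es"
  unfolding proj_def using assms ip_lincomb_left by (intro lincomb_cong) auto

lemma orthonormal_snoc:
  assumes "orthonormal es" "norm e = 1" "orth es e"
  shows "orthonormal (es @ [e])"
proof -
  have ee: "ip e e = 1" using assms by (simp add: ip_self)
  have a: "ip e (es!j) = 0" if "j < length es" for j using assms that by (simp add: orth_def)
  have b: "ip (es!j) e = 0" if "j < length es" for j using a[OF that] by (metis ip_cnj complex_cnj_zero)
  show ?thesis using assms(1) unfolding orthonormal_def
    by (auto simp: nth_append a b ee less_Suc_eq)
qed

lemma orthonormal_distinct: "orthonormal es \<Longrightarrow> distinct es"
  unfolding distinct_conv_nth orthonormal_def by (metis zero_neq_one)

lemma sum_set_nth: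
  assumes "distinct es"
  shows "(\<Sum>v\<in>set es. f v) = (\<Sum>j<length es. f (es!j))"
  using sum.reindex_bij_betw[OF bij_betw_nth[OF assms refl refl], of f] by simp

lemma orthonormal_independent:
  assumes "orthonormal es"
  shows "V.independent (set es)"
proof
  assume "V.dependent (set es)"
  then obtain u where u: "\<exists>v\<in>set es. u v \<noteq> 0" "(\<Sum>v\<in>set es. sc (u v) v) = 0"
    using V.dependent_finite by blast
  have "(\<Sum>v\<in>set es. sc (u v) v) = (\<Sum>j<length es. sc (u (es!j)) (es!j))"
    by (rule sum_set_nth[OF orthonormal_distinct[OF assms]])
  hence "lincomb (\<lambda>j. u (es!j)) es = 0"
    using u(2) by (simp add: lincomb_def)
  hence z: "\<forall>j<length es. u (es!j) = 0" by (simp only: lincomb_eq_zero_iff[OF assms])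
  from u(1) obtain v where v: "v \<in> set es" "u v \<noteq> 0" by blast
  then obtain i where "i < length es" "v = es!i" by (auto simp: in_set_conv_nth)
  thus False using z v by simp
qed

lemma dim_orthonormal:
  assumes "V.subspace E" "orthonormal es" "set es \<subseteq> E" "\<And>v. v \<in> E \<Longrightarrow> \<exists>c. v = lincomb c es"
  shows "V.dim E = length es"
proof -
  have sp: "V.span (set es) = E"
    using assms lincomb_in_span by (intro V.span_subspace) auto
  have spE: "V.span E = E" using assms(1) by simp
  have "V.dim E = card (set es)"
    using V.dim_eq_card[of "set es" E] sp spE orthonormal_independent[OF assms(2)] by simp
  thus ?thesis using distinct_card[OF orthonormal_distinct[OF assms(2)]] by simp
qed

lemma exists_orth_comb:
  assumes "finite J" "card J > length es"
  shows "\<exists>c. (\<exists>j\<in>J. c j \<noteq> 0) \<and> (\<forall>e\<in>set es. ip (\<Sum>j\<in>J. sc (c j) (a j)) e = 0)"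
  using assms
proof (induction es arbitrary: J a)
  case Nil
  then obtain j where "j \<in> J" by fastforce
  thus ?case by (intro exI[of _ "\<lambda>_. 1"]) auto
next
  case (Cons e es)
  show ?case
  proof (cases "\<forall>j\<in>J. ip (a j) e = 0")
    case True
    from Cons.IH[of J a] Cons.prems obtain c where c: "\<exists>j\<in>J. c j \<noteq> 0"
      "\<forall>e\<in>set es. ip (\<Sum>j\<in>J. sc (c j) (a j)) e = 0" by auto
    have "ip (\<Sum>j\<in>J. sc (c j) (a j)) e = 0"
      using True by (simp add: ip_sum_left ip_sc_left)
    thus ?thesis using c by auto
  next
    case False
    then obtain j0 where j0: "j0 \<in> J" "ip (a j0) e \<noteq> 0" by blast
    define p where "p = ip (a j0) e"
    define J' where "J' = J - {j0}"
    define a' where "a' j = a j - sc (ip (a j) e / p) (a j0)" for j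
    have fJ': "finite J'" "card J' > length es"
      using Cons.prems j0 by (auto simp: J'_def)
    from Cons.IH[OF fJ'] obtain c' where c': "\<exists>j\<in>J'. c' j \<noteq> 0"
      "\<forall>e\<in>set es. ip (\<Sum>j\<in>J'. sc (c' j) (a' j)) e = 0" by blast
    define c where "c j = (if j = j0 then - (\<Sum>i\<in>J'. c' i * (ip (a i) e / p)) else c' j)" for j
    have "(\<Sum>j\<in>J'. sc (c' j) (a' j)) =
          (\<Sum>j\<in>J'. sc (c' j) (a j)) - (\<Sum>j\<in>J'. sc (c' j * (ip (a j) e / p)) (a j0))"
      by (simp add: a'_def sc_diff sum_subtractf)
    also have "\<dots> = (\<Sum>j\<in>J'. sc (c j) (a j)) + sc (c j0) (a j0)"
    proof -
      have 1: "(\<Sum>j\<in>J'. sc (c' j * (ip (a j) e / p)) (a j0)) = sc (\<Sum>j\<in>J'. c' j * (ip (a j) e / p)) (a j0)"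
        by (rule V.scale_sum_left[symmetric])
      have 2: "sc (c j0) (a j0) = - sc (\<Sum>j\<in>J'. c' j * (ip (a j) e / p)) (a j0)"
        by (simp add: c_def V.scale_minus_left)
      have 3: "(\<Sum>j\<in>J'. sc (c j) (a j)) = (\<Sum>j\<in>J'. sc (c' j) (a j))"
        by (intro sum.cong) (auto simp: c_def J'_def)
      show ?thesis by (simp only: 1 2 3) simp
    qed
    also have "\<dots> = (\<Sum>j\<in>J. sc (c j) (a j))"
      using Cons.prems j0 by (simp add: J'_def sum.remove add.commute)
    finally have eq: "(\<Sum>j\<in>J. sc (c j) (a j)) = (\<Sum>j\<in>J'. sc (c' j) (a' j))" by simp
    have "ip (a' j) e = 0" for j
      using j0 by (simp add: a'_def ip_diff_left ip_sc_left p_def)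
    hence ze: "ip (\<Sum>j\<in>J'. sc (c' j) (a' j)) e = 0" by (simp add: ip_sum_left ip_sc_left)
    have nz: "\<exists>j\<in>J. c j \<noteq> 0" using c'(1) by (auto simp: c_def J'_def)
    show ?thesis
    proof (intro exI[of _ c] conjI ballI)
      show "\<exists>j\<in>J. c j \<noteq> 0" by (rule nz)
      fix e' assume "e' \<in> set (e # es)"
      hence "e' = e \<or> e' \<in> set es" by simp
      thus "ip (\<Sum>j\<in>J. sc (c j) (a j)) e' = 0"
      proof
        assume "e' = e" thus ?thesis using ze eq by simp
      next
        assume "e' \<in> set es" thus ?thesis using c'(2) eq by simp
      qed
    qed
  qed
qed

lemma exists_orth_in_span:
  assumes "orthonormal as" "length as > length es"
  shows "\<exists>c. lincomb c as \<noteq> 0 \<and> orth es (lincomb c as)"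
proof -
  from exists_orth_comb[of "{..<length as}" es "\<lambda>j. as!j"] assms
  obtain c where c: "\<exists>j<length as. c j \<noteq> 0"
    "\<forall>e\<in>set es. ip (\<Sum>j<length as. sc (c j) (as!j)) e = 0" by auto
  have "lincomb c as \<noteq> 0" using c(1) lincomb_eq_zero_iff[OF assms(1)] by blast
  thus ?thesis using c(2) by (auto simp: orth_def lincomb_def)
qed

lemma tendsto_sc_left:
  assumes "(f \<longlongrightarrow> a) F"
  shows "((\<lambda>t. sc (f t) x) \<longlongrightarrow> sc a x) F"
proof -
  have "((\<lambda>t. f t - a) \<longlongrightarrow> 0) F" using assms by (rule LIM_zero)
  hence "((\<lambda>t. cmod (f t - a) * norm x) \<longlongrightarrow> 0) F"
    by (intro tendsto_mult_left_zero tendsto_norm_zero)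
  hence "((\<lambda>t. norm (sc (f t) x - sc a x)) \<longlongrightarrow> 0) F"
    by (simp add: norm_sc V.scale_left_diff_distrib[symmetric])
  thus ?thesis by (simp add: tendsto_norm_zero_iff LIM_zero_cancel)
qed

lemma tendsto_lincomb:
  assumes "\<And>j. j < length es \<Longrightarrow> ((\<lambda>t. c t j) \<longlongrightarrow> a j) F"
  shows "((\<lambda>t. lincomb (c t) es) \<longlongrightarrow> lincomb a es) F"
  unfolding lincomb_def using assms by (intro tendsto_sum tendsto_sc_left) auto

lemma tendsto_proj:
  assumes "(f \<longlongrightarrow> y) F"
  shows "((\<lambda>t. proj es (f t)) \<longlongrightarrow> proj es y) F"
  unfolding proj_def using assms by (intro tendsto_lincomb tendsto_ip tendsto_const)

lemma proj_diff: "proj es (x - y) = proj es x - proj es y"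
  by (simp add: proj_def lincomb_def ip_diff_left V.scale_left_diff_distrib sum_subtractf)

lemma proj_zero_orth: "orth es y \<Longrightarrow> proj es y = 0"
  by (simp add: proj_def lincomb_def orth_def)

lemma proj_in_subspace: "V.subspace S \<Longrightarrow> set es \<subseteq> S \<Longrightarrow> proj es y \<in> S"
  unfolding proj_def by (rule lincomb_in_subspace)

lemma projection_theorem:
  assumes sub: "V.subspace M" and cl: "closed M"
  shows "\<exists>m\<in>M. \<forall>v\<in>M. ip (y - m) v = 0"
proof -
  have ne: "M \<noteq> {}" using sub V.subspace_0 by blast
  define d where "d = (INF m\<in>M. dist y m)"
  have bdd: "bdd_below (dist y ` M)" by (auto intro!: bdd_belowI[of _ 0])
  have dle: "d \<le> dist y m" if "m \<in> M" for m unfolding d_def using bdd that by (rule cINF_lower)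
  have d0: "0 \<le> d" unfolding d_def using ne by (intro cINF_greatest) auto
  have "\<exists>m\<in>M. dist y m < d + 1 / (Suc n)" for n
  proof -
    have "d < d + 1 / Suc n" by simp
    thus ?thesis unfolding d_def using cINF_less_iff[OF ne bdd] by blast
  qed
  then obtain m where m: "\<And>n. m n \<in> M" "\<And>n. dist y (m n) < d + 1 / (Suc n)" by metis
  have mid: "(1/2::real) *\<^sub>R (m i + m j) \<in> M" for i j
    using sub m(1) by (metis V.subspace_add V.subspace_scale sc_real)
  have par: "(norm (m i - m j))\<^sup>2 \<le> 2 * (d + 1 / Suc i)\<^sup>2 + 2 * (d + 1 / Suc j)\<^sup>2 - 4 * d\<^sup>2" for i j
  proof -
    define a where "a = y - m i" define b where "b = y - m j"
    have pl: "(norm (a + b))\<^sup>2 + (norm (a - b))\<^sup>2 = 2 * (norm a)\<^sup>2 + 2 * (norm b)\<^sup>2"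
      by (simp add: norm_add_sq norm_diff_sq)
    have "a + b = 2 *\<^sub>R (y - (1/2::real) *\<^sub>R (m i + m j))"
      by (simp add: a_def b_def algebra_simps scaleR_2)
    hence "norm (a + b) = 2 * dist y ((1/2::real) *\<^sub>R (m i + m j))" by (simp add: dist_norm)
    hence "norm (a + b) \<ge> 2 * d" using dle[OF mid] by simp
    hence "(norm (a + b))\<^sup>2 \<ge> (2 * d)\<^sup>2" using d0 by (intro power_mono) auto
    moreover have "norm a \<le> d + 1 / Suc i" "norm b \<le> d + 1 / Suc j"
      using m(2)[of i] m(2)[of j] by (auto simp: a_def b_def dist_norm)
    hence "(norm a)\<^sup>2 \<le> (d + 1 / Suc i)\<^sup>2" "(norm b)\<^sup>2 \<le> (d + 1 / Suc j)\<^sup>2"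
      by (auto intro!: power_mono)
    moreover have "a - b = m j - m i" by (simp add: a_def b_def)
    hence "norm (a - b) = norm (m i - m j)" by (simp add: norm_minus_commute)
    ultimately show ?thesis using pl by (simp add: power_mult_distrib)
  qed
  have "Cauchy m"
  proof (rule metric_CauchyI)
    fix e :: real assume e: "e > 0"
    have "((\<lambda>n. 4 * d * (1 / Suc n) + 2 * (1 / Suc n)\<^sup>2) \<longlongrightarrow> 4 * d * 0 + 2 * 0\<^sup>2) sequentially"
      by (intro tendsto_intros lim_one_over_Suc) 
    hence "\<forall>\<^sub>F n in sequentially. 4 * d * (1 / Suc n) + 2 * (1 / Suc n)\<^sup>2 < e\<^sup>2 / 2"
      using e by (intro order_tendstoD) auto
    then obtain N where N: "\<And>n. n \<ge> N \<Longrightarrow> 4 * d * (1 / Suc n) + 2 * (1 / Suc n)\<^sup>2 < e\<^sup>2 / 2"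
      unfolding eventually_sequentially by blast
    show "\<exists>N. \<forall>i\<ge>N. \<forall>j\<ge>N. dist (m i) (m j) < e"
    proof (intro exI allI impI)
      fix i j assume ij: "N \<le> i" "N \<le> j"
      have "(norm (m i - m j))\<^sup>2 \<le> (4 * d * (1 / Suc i) + 2 * (1 / Suc i)\<^sup>2) + (4 * d * (1 / Suc j) + 2 * (1 / Suc j)\<^sup>2)"
        using par[of i j] by (simp add: power2_sum algebra_simps)
      also have "\<dots> < e\<^sup>2" using N[OF ij(1)] N[OF ij(2)] by simp
      finally have "(norm (m i - m j))\<^sup>2 < e\<^sup>2" .
      thus "dist (m i) (m j) < e" using e by (simp add: dist_norm power_less_imp_less_base)
    qed
  qed
  then obtain m0 where m0: "m \<longlonglongrightarrow> m0" using Cauchy_convergent_iff convergent_def by blast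
  have m0M: "m0 \<in> M" using cl m0 m(1) closed_sequentially by blast
  have "((\<lambda>n. dist y (m n)) \<longlongrightarrow> dist y m0) sequentially" using m0 by (intro tendsto_intros)
  moreover have "dist y (m n) \<le> d + 1 / Suc n" for n using m(2)[of n] by simp
  moreover have "((\<lambda>n. d + 1 / Suc n) \<longlongrightarrow> d + 0) sequentially"
    by (intro tendsto_intros lim_one_over_Suc)
  ultimately have "dist y m0 \<le> d + 0"
    by (intro tendsto_le[OF sequentially_bot, of "\<lambda>n. d + 1 / Suc n" _ "\<lambda>n. dist y (m n)"]) auto
  hence dm0: "dist y m0 = d" using dle[OF m0M] by simp
  have "ip (y - m0) v = 0" if v: "v \<in> M" for v
  proof -
    have re: "Re (ip (y - m0) w) = 0" if w: "w \<in> M" for w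
    proof -
      have "0 \<le> (-2 * Re (ip (y - m0) w)) * t + (norm w)\<^sup>2 * t\<^sup>2" for t
      proof -
        have "m0 + t *\<^sub>R w \<in> M" using sub m0M w by (metis V.subspace_add V.subspace_scale sc_real)
        hence "d \<le> norm (y - m0 - t *\<^sub>R w)" using dle by (simp add: dist_norm diff_diff_eq)
        hence "d\<^sup>2 \<le> (norm (y - m0 - t *\<^sub>R w))\<^sup>2" using d0 by (intro power_mono) auto
        also have "\<dots> = d\<^sup>2 - 2 * (t * Re (ip (y - m0) w)) + t\<^sup>2 * (norm w)\<^sup>2"
          using dm0 by (simp add: norm_diff_sq ip_scaleR_right dist_norm power_mult_distrib)
        finally show ?thesis by (simp add: algebra_simps)
      qed
      thus ?thesis using quad_zero by fastforce
    qed
    have "Re (ip (y - m0) v) = 0" using re v .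
    moreover have "Im (ip (y - m0) v) = 0"
      using re[of "sc \<i> v"] sub v by (simp add: sc_i_Re V.subspace_scale)
    ultimately show ?thesis by (simp add: complex_eq_iff)
  qed
  thus ?thesis using m0M by blast
qed

end

locale sa_op = chs sc ip for sc :: "complex \<Rightarrow> 'h::banach \<Rightarrow> 'h" and ip +
  fixes D :: "'h set" and T :: "'h \<Rightarrow> 'h" and mu :: real
  assumes sa: "self_adjoint sc ip D T"
    and cr: "compact_resolvent sc D T"
    and lb: "\<And>x. x \<in> D \<Longrightarrow> 0 \<le> Re (ip (T x - sc (complex_of_real mu) x) x)"
begin

lemma subD: "V.subspace D"
  using sa unfolding self_adjoint_def linear_on_def by blast
lemma T_add: "x \<in> D \<Longrightarrow> y \<in> D \<Longrightarrow> T (x + y) = T x + T y"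
  using sa unfolding self_adjoint_def linear_on_def by blast
lemma T_sc: "x \<in> D \<Longrightarrow> T (sc c x) = sc c (T x)"
  using sa unfolding self_adjoint_def linear_on_def by blast
lemma T_sym: "x \<in> D \<Longrightarrow> y \<in> D \<Longrightarrow> ip (T x) y = ip x (T y)"
  using sa unfolding self_adjoint_def by blast
lemma T_adj: "(\<And>x. x \<in> D \<Longrightarrow> ip (T x) y = ip x z) \<Longrightarrow> y \<in> D \<and> T y = z"
  using sa unfolding self_adjoint_def by blast

lemma D_0[simp]: "0 \<in> D" using subD V.subspace_0 by blast
lemma D_add: "x \<in> D \<Longrightarrow> y \<in> D \<Longrightarrow> x + y \<in> D" using subD V.subspace_add by blast
lemma D_sc: "x \<in> D \<Longrightarrow> sc c x \<in> D" using subD V.subspace_scale by blast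
lemma D_diff: "x \<in> D \<Longrightarrow> y \<in> D \<Longrightarrow> x - y \<in> D" using subD V.subspace_diff by blast
lemma D_minus: "x \<in> D \<Longrightarrow> - x \<in> D" using subD V.subspace_neg by blast
lemma D_scaleR: "x \<in> D \<Longrightarrow> r *\<^sub>R x \<in> D" using D_sc[of x "complex_of_real r"] by (simp add: sc_real)

lemma T_0[simp]: "T 0 = 0" using T_add[of 0 0] by simp
lemma T_minus: "x \<in> D \<Longrightarrow> T (- x) = - T x"
  using T_add[of x "-x"] D_minus[of x] by (simp add: neg_eq_iff_add_eq_0[symmetric])
lemma T_diff: "x \<in> D \<Longrightarrow> y \<in> D \<Longrightarrow> T (x - y) = T x - T y"
  using T_add[of x "-y"] D_minus[of y] T_minus[of y] by simp
lemma T_scaleR: "x \<in> D \<Longrightarrow> T (r *\<^sub>R x) = r *\<^sub>R T x"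
  using T_sc[of x "complex_of_real r"] by (simp add: sc_real)

definition q :: "'h \<Rightarrow> real" where "q x = Re (ip (T x) x)"

lemma ip_T_self: "x \<in> D \<Longrightarrow> ip (T x) x = complex_of_real (q x)"
proof -
  assume x: "x \<in> D"
  have "ip (T x) x = cnj (ip (T x) x)"
    using T_sym[OF x x] ip_cnj[of x "T x"] by simp
  hence "Im (ip (T x) x) = - Im (ip (T x) x)" by (metis cnj.sel(2))
  hence "Im (ip (T x) x) = 0" by simp
  thus ?thesis by (simp add: q_def complex_eq_iff)
qed

lemma q_lb: "x \<in> D \<Longrightarrow> mu * (norm x)\<^sup>2 \<le> q x"
  using lb[of x] by (simp add: q_def ip_diff_left ip_sc_left Re_ip_self)

lemma T_closed:
  assumes "\<And>n. x n \<in> D" "x \<longlonglongrightarrow> a" "(\<lambda>n. T (x n)) \<longlonglongrightarrow> b"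
  shows "a \<in> D \<and> T a = b"
proof (rule T_adj)
  fix v assume v: "v \<in> D"
  have "(\<lambda>n. ip (T v) (x n)) \<longlonglongrightarrow> ip (T v) a" using assms by (intro tendsto_intros)
  moreover have "(\<lambda>n. ip v (T (x n))) \<longlonglongrightarrow> ip v b" using assms by (intro tendsto_intros)
  moreover have "ip (T v) (x n) = ip v (T (x n))" for n using T_sym[OF v assms(1)] .
  ultimately show "ip (T v) a = ip v b" using LIMSEQ_unique by force
qed

lemma norm_Ti: "x \<in> D \<Longrightarrow> (norm (T x - sc \<i> x))\<^sup>2 = (norm (T x))\<^sup>2 + (norm x)\<^sup>2"
proof -
  assume x: "x \<in> D"
  have "Re (ip (T x) (sc \<i> x)) = 0"
    using ip_T_self[OF x] by (simp add: ip_sc_right)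
  thus ?thesis by (simp add: norm_diff_sq norm_sc)
qed

lemma norm_le_Ti: "x \<in> D \<Longrightarrow> norm x \<le> norm (T x - sc \<i> x)"
proof -
  assume x: "x \<in> D"
  have "(norm x)\<^sup>2 \<le> (norm (T x - sc \<i> x))\<^sup>2" using norm_Ti[OF x] by simp
  thus ?thesis by (rule power2_le_imp_le) simp
qed

lemma Ti_diff: "x \<in> D \<Longrightarrow> y \<in> D \<Longrightarrow> (T x - sc \<i> x) - (T y - sc \<i> y) = T (x - y) - sc \<i> (x - y)"
  by (simp add: T_diff sc_diff)

lemma Ti_surj: "\<exists>x\<in>D. T x - sc \<i> x = y"
proof -
  define Ran where "Ran = (\<lambda>x. T x - sc \<i> x) ` D"
  have subR: "V.subspace Ran"
    unfolding Ran_def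
  proof (unfold V.subspace_def, intro conjI allI impI ballI)
    show "0 \<in> (\<lambda>x. T x - sc \<i> x) ` D" by (rule image_eqI[of _ _ 0]) auto
  next
    fix x y assume "x \<in> (\<lambda>x. T x - sc \<i> x) ` D" "y \<in> (\<lambda>x. T x - sc \<i> x) ` D"
    then obtain a b where "a \<in> D" "b \<in> D" "x = T a - sc \<i> a" "y = T b - sc \<i> b" by blast
    thus "x + y \<in> (\<lambda>x. T x - sc \<i> x) ` D"
      by (intro image_eqI[of _ _ "a + b"]) (auto simp: T_add D_add sc_add)
  next
    fix c x assume "x \<in> (\<lambda>x. T x - sc \<i> x) ` D"
    then obtain a where "a \<in> D" "x = T a - sc \<i> a" by blast
    thus "sc c x \<in> (\<lambda>x. T x - sc \<i> x) ` D"
      by (intro image_eqI[of _ _ "sc c a"]) (auto simp: T_sc D_sc sc_diff mult.commute)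
  qed
  have clR: "closed Ran"
    unfolding closed_sequential_limits
  proof (intro allI impI, elim conjE)
    fix yy l assume yy: "\<forall>n. yy n \<in> Ran" and l: "yy \<longlonglongrightarrow> l"
    have ex: "\<exists>x. x \<in> D \<and> yy n = T x - sc \<i> x" for n using yy unfolding Ran_def by blast
    define xx where "xx n = (SOME x. x \<in> D \<and> yy n = T x - sc \<i> x)" for n
    have xx0: "xx n \<in> D \<and> yy n = T (xx n) - sc \<i> (xx n)" for n
      unfolding xx_def by (rule someI_ex) (rule ex)
    hence xx: "\<And>n. xx n \<in> D" "\<And>n. yy n = T (xx n) - sc \<i> (xx n)" by auto
    have "Cauchy xx"
    proof (rule metric_CauchyI)
      fix e :: real assume "e > 0"
      then obtain N where N: "\<And>m n. m \<ge> N \<Longrightarrow> n \<ge> N \<Longrightarrow> dist (yy m) (yy n) < e"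
        using LIMSEQ_imp_Cauchy[OF l] unfolding Cauchy_def by blast
      show "\<exists>N. \<forall>m\<ge>N. \<forall>n\<ge>N. dist (xx m) (xx n) < e"
      proof (intro exI allI impI)
        fix m n assume "m \<ge> N" "n \<ge> N"
        have "dist (xx m) (xx n) \<le> dist (yy m) (yy n)"
          using norm_le_Ti[OF D_diff[OF xx(1)[of m] xx(1)[of n]]] Ti_diff[OF xx(1)[of m] xx(1)[of n]]
          by (simp add: dist_norm xx(2))
        thus "dist (xx m) (xx n) < e" using N \<open>m \<ge> N\<close> \<open>n \<ge> N\<close> by (meson le_less_trans)
      qed
    qed
    then obtain a where a: "xx \<longlonglongrightarrow> a" using Cauchy_convergent_iff convergent_def by blast
    have "(\<lambda>n. yy n + sc \<i> (xx n)) \<longlonglongrightarrow> l + sc \<i> a" using l a by (intro tendsto_intros)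
    hence "(\<lambda>n. T (xx n)) \<longlonglongrightarrow> l + sc \<i> a" by (simp add: xx(2))
    from T_closed[OF xx(1) a this] have "a \<in> D" "T a = l + sc \<i> a" by auto
    thus "l \<in> Ran" unfolding Ran_def by (intro image_eqI[of _ _ a]) auto
  qed
  obtain m where m: "m \<in> Ran" "\<And>v. v \<in> Ran \<Longrightarrow> ip (y - m) v = 0"
    using projection_theorem[OF subR clR, of y] by blast
  define w where "w = y - m"
  have "w \<in> D \<and> T w = sc (- \<i>) w"
  proof (rule T_adj)
    fix x assume x: "x \<in> D"
    have "ip w (T x - sc \<i> x) = 0" using m(2)[of "T x - sc \<i> x"] x by (simp add: Ran_def w_def)
    hence "ip (T x - sc \<i> x) w = 0" by (metis ip_cnj complex_cnj_zero)
    thus "ip (T x) w = ip x (sc (- \<i>) w)" by (simp add: ip_diff_left ip_sc_left ip_sc_right ip_minus_right)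
  qed
  hence "ip (T w) w = - \<i> * complex_of_real ((norm w)\<^sup>2)" by (simp add: ip_sc_left ip_self ip_minus_left)
  moreover have "Im (ip (T w) w) = 0"
  proof -
    have wD: "w \<in> D" using \<open>w \<in> D \<and> _\<close> by simp
    show ?thesis by (simp only: ip_T_self[OF wD]) simp
  qed
  ultimately have "norm w = 0" by simp
  hence "y = m" by (simp add: w_def)
  thus ?thesis using m(1) unfolding Ran_def by blast
qed

lemma Ti_unique: "x \<in> D \<Longrightarrow> x' \<in> D \<Longrightarrow> T x - sc \<i> x = T x' - sc \<i> x' \<Longrightarrow> x = x'"
  using norm_le_Ti[OF D_diff[of x x']] Ti_diff[of x x'] by simp

definition R :: "'h \<Rightarrow> 'h" where "R = resolvent sc D T \<i>"

lemma R_ex1: "\<exists>!x. x \<in> D \<and> T x - sc \<i> x = y"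
  using Ti_surj[of y] Ti_unique by blast

lemma R_mem: "R y \<in> D" and R_eq: "T (R y) - sc \<i> (R y) = y"
  using theI'[OF R_ex1[of y]] unfolding R_def resolvent_def by auto

lemma R_inv: "x \<in> D \<Longrightarrow> R (T x - sc \<i> x) = x"
proof -
  assume x: "x \<in> D"
  have "T (R (T x - sc \<i> x)) - sc \<i> (R (T x - sc \<i> x)) = T x - sc \<i> x" by (rule R_eq)
  thus ?thesis by (rule Ti_unique[OF R_mem x])
qed

lemma R_norm: "norm (R y) \<le> norm y"
  using norm_le_Ti[OF R_mem[of y]] R_eq[of y] by simp

lemma R_add: "R (x + y) = R x + R y"
proof -
  have "T (R x + R y) - sc \<i> (R x + R y) = x + y"
    using R_eq[of x] R_eq[of y] by (simp add: T_add R_mem sc_add algebra_simps)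
  hence "R (x + y) = R (T (R x + R y) - sc \<i> (R x + R y))" by simp
  thus ?thesis using R_inv[OF D_add[OF R_mem R_mem]] by simp
qed

lemma R_sc: "R (sc c x) = sc c (R x)"
proof -
  have "T (sc c (R x)) - sc \<i> (sc c (R x)) = sc c (T (R x)) - sc (c * \<i>) (R x)"
    by (simp add: T_sc R_mem mult.commute)
  also have "\<dots> = sc c (T (R x) - sc \<i> (R x))" by (simp add: sc_diff)
  also have "\<dots> = sc c x" by (simp only: R_eq)
  finally have "T (sc c (R x)) - sc \<i> (sc c (R x)) = sc c x" .
  hence "R (sc c x) = R (T (sc c (R x)) - sc \<i> (sc c (R x)))" by simp
  thus ?thesis using R_inv[OF D_sc[OF R_mem]] by simp
qed

lemma R_diff: "R (x - y) = R x - R y"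
  using R_add[of x "-y"] R_sc[of "-1" y] by (simp add: V.scale_minus_left)

lemma bounded_linear_R: "bounded_linear R"
proof (rule bounded_linear_intro[of _ 1])
  show "R (x + y) = R x + R y" for x y by (rule R_add)
  show "R (r *\<^sub>R x) = r *\<^sub>R R x" for r x using R_sc[of "complex_of_real r" x] by (simp add: sc_real)
  show "norm (R x) \<le> norm x * 1" for x using R_norm by simp
qed

definition eigvec :: "real \<Rightarrow> 'h \<Rightarrow> bool" where
  "eigvec m v \<longleftrightarrow> v \<in> D \<and> T v = sc (complex_of_real m) v"

lemma R_eig: "eigvec m e \<Longrightarrow> R e = sc (1 / (complex_of_real m - \<i>)) e"
proof -
  assume e: "eigvec m e"
  have ne: "complex_of_real m - \<i> \<noteq> 0" by (simp add: complex_eq_iff)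
  define k where "k = 1 / (complex_of_real m - \<i>)"
  have "T (sc k e) - sc \<i> (sc k e) = sc (k * complex_of_real m) e - sc (\<i> * k) e"
    using e by (simp add: eigvec_def T_sc)
  also have "\<dots> = sc (k * (complex_of_real m - \<i>)) e"
    by (simp only: right_diff_distrib V.scale_left_diff_distrib mult.commute)
  also have "k * (complex_of_real m - \<i>) = 1" using ne by (simp add: k_def)
  finally have fin: "T (sc k e) - sc \<i> (sc k e) = e" by simp
  have eD: "e \<in> D" using e eigvec_def by simp
  have "R (T (sc k e) - sc \<i> (sc k e)) = sc k e" by (rule R_inv[OF D_sc[OF eD]])
  hence "R e = sc k e" by (simp only: fin)
  thus ?thesis by (simp only: k_def)
qed

lemma q_eig: "eigvec m e \<Longrightarrow> q e = m * (norm e)\<^sup>2"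
  by (simp add: eigvec_def q_def ip_sc_left Re_ip_self ip_self)

lemma eig_orth:
  assumes "eigvec m v" "eigvec m' w" "m \<noteq> m'"
  shows "ip v w = 0"
proof -
  have "complex_of_real m * ip v w = ip (T v) w" using assms by (simp add: eigvec_def ip_sc_left)
  also have "\<dots> = ip v (T w)" using assms unfolding eigvec_def by (intro T_sym) auto
  also have "\<dots> = complex_of_real m' * ip v w" using assms by (simp add: eigvec_def ip_sc_right)
  finally show ?thesis using assms(3) by simp
qed

end

lemma small_aux:
  fixes e K k :: real
  assumes e: "e > 0" and K: "K \<ge> 0" and k: "k \<ge> 0"
  shows "\<exists>\<eta>>0. \<forall>t. 0 \<le> t \<and> t < \<eta> \<longrightarrow> sqrt ((2*t + k*t\<^sup>2) * K) + 2*k*t < e\<^sup>2"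
proof -
  define A where "A = (2 + k) * (K + 1)"
  have A: "A > 0" using K k by (simp add: A_def)
  define \<eta> where "\<eta> = min 1 (min (e^4 / (4*A)) (e\<^sup>2 / (4*(k+1))))"
  have \<eta>: "\<eta> > 0" using A e k by (simp add: \<eta>_def)
  have "sqrt ((2*t + k*t\<^sup>2) * K) + 2*k*t < e\<^sup>2" if t: "0 \<le> t" "t < \<eta>" for t
  proof -
    have t1: "t \<le> 1" using t by (simp add: \<eta>_def)
    have "t * t \<le> t * 1" using t t1 by (intro mult_left_mono) auto
    hence tt: "t\<^sup>2 \<le> t" by (simp add: power2_eq_square)
    have "(2*t + k*t\<^sup>2) * K \<le> (2*t + k*t) * K" using tt k K by (intro mult_right_mono add_left_mono mult_left_mono) auto
    also have "\<dots> = (2 + k) * K * t" by (simp add: algebra_simps)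
    also have "\<dots> \<le> A * t" using k K t by (intro mult_right_mono) (auto simp: A_def)
    also have "\<dots> < A * (e^4 / (4*A))"
      using A t by (intro mult_strict_left_mono) (auto simp: \<eta>_def)
    also have "\<dots> = (e\<^sup>2/2)\<^sup>2" using A by (simp add: field_simps power2_eq_square power4_eq_xxxx)
    finally have "sqrt ((2*t + k*t\<^sup>2) * K) < e\<^sup>2/2" using e by (intro real_less_lsqrt) auto
    moreover have "2*k*t \<le> 2*k*(e\<^sup>2 / (4*(k+1)))"
      using t k by (intro mult_left_mono) (auto simp: \<eta>_def)
    moreover have "2*k*(e\<^sup>2 / (4*(k+1))) \<le> e\<^sup>2/2"
      using k e by (simp add: field_simps)
    ultimately show ?thesis by simp
  qed
  thus ?thesis using \<eta> by blast
qed

context sa_op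
begin

definition z0 where "z0 = (SOME z. in_resolvent_set sc D T z \<and> compact_operator (resolvent sc D T z))"
definition Rz where "Rz = resolvent sc D T z0"

lemma z0: "in_resolvent_set sc D T z0 \<and> compact_operator Rz"
  unfolding z0_def Rz_def using cr unfolding compact_resolvent_def by (rule someI_ex)

lemma Rz_ex1: "\<exists>!x. x \<in> D \<and> T x - sc z0 x = y"
  using z0 unfolding in_resolvent_set_def by blast

lemma Rz_mem: "Rz y \<in> D" and Rz_eq: "T (Rz y) - sc z0 (Rz y) = y"
  using theI'[OF Rz_ex1[of y]] unfolding Rz_def resolvent_def by auto

lemma Rz_unique: "x \<in> D \<Longrightarrow> T x - sc z0 x = y \<Longrightarrow> Rz y = x"
  using Rz_ex1[of y] Rz_mem[of y] Rz_eq[of y] by blast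

lemma Rz_diff: "Rz (a - b) = Rz a - Rz b"
proof (rule Rz_unique)
  show "Rz a - Rz b \<in> D" by (intro D_diff Rz_mem)
  show "T (Rz a - Rz b) - sc z0 (Rz a - Rz b) = a - b"
    using Rz_eq[of a] Rz_eq[of b] by (simp add: T_diff Rz_mem sc_diff algebra_simps)
qed

lemma Rz_compact: "compact (closure (Rz ` cball 0 1))"
  using z0 unfolding compact_operator_def by simp

definition Tm where "Tm x = T x - sc (complex_of_real mu) x"
definition Bf where "Bf x y = Re (ip (Tm x) y)"

lemma Tm_diff: "x \<in> D \<Longrightarrow> y \<in> D \<Longrightarrow> Tm (x - y) = Tm x - Tm y"
  by (simp add: Tm_def T_diff sc_diff)
lemma Tm_add: "x \<in> D \<Longrightarrow> y \<in> D \<Longrightarrow> Tm (x + y) = Tm x + Tm y"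
  by (simp add: Tm_def T_add sc_add)
lemma Tm_scaleR: "x \<in> D \<Longrightarrow> Tm (r *\<^sub>R x) = r *\<^sub>R Tm x"
  by (simp add: Tm_def T_scaleR scaleR_diff_right) (metis sc_real sc_sc mult.commute)

lemma Bf_sym: "x \<in> D \<Longrightarrow> y \<in> D \<Longrightarrow> Bf x y = Bf y x"
proof -
  assume x: "x \<in> D" and y: "y \<in> D"
  have "Re (ip (T x) y) = Re (ip (T y) x)"
    using T_sym[OF y x] Re_ip_sym[of "T x" y] by simp
  moreover have "Re (ip x y) = Re (ip y x)" by (rule Re_ip_sym[symmetric])
  ultimately show ?thesis by (simp add: Bf_def Tm_def ip_diff_left ip_sc_left)
qed

lemma Bf_nonneg: "x \<in> D \<Longrightarrow> 0 \<le> Bf x x"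
  using lb by (simp add: Bf_def Tm_def)

lemma Bf_q: "x \<in> D \<Longrightarrow> Bf x x = q x - mu * (norm x)\<^sup>2"
  by (simp add: Bf_def Tm_def q_def ip_diff_left ip_sc_left Re_ip_self)

lemma Bf_expand:
  assumes "x \<in> D" "y \<in> D"
  shows "Bf (x + t *\<^sub>R y) (x + t *\<^sub>R y) = Bf x x + 2 * Bf x y * t + Bf y y * t\<^sup>2"
proof -
  have "Bf (x + t *\<^sub>R y) (x + t *\<^sub>R y) = Bf x x + t * Bf x y + t * Bf y x + t * t * Bf y y"
    using assms by (simp add: Bf_def Tm_add Tm_scaleR D_scaleR ip_add_left ip_add_right
        ip_scaleR_left ip_scaleR_right algebra_simps)
  thus ?thesis using Bf_sym[OF assms] by (simp add: power2_eq_square algebra_simps)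
qed

lemma Bf_CS: "x \<in> D \<Longrightarrow> y \<in> D \<Longrightarrow> (Bf x y)\<^sup>2 \<le> Bf x x * Bf y y"
proof -
  assume x: "x \<in> D" and y: "y \<in> D"
  show ?thesis
  proof (rule discr_le)
    fix t
    have "0 \<le> Bf (x + t *\<^sub>R y) (x + t *\<^sub>R y)" using x y by (intro Bf_nonneg D_add D_scaleR)
    thus "0 \<le> Bf x x + 2 * Bf x y * t + Bf y y * t\<^sup>2" by (simp only: Bf_expand[OF x y])
  qed (use x y Bf_nonneg in auto)
qed

lemma Bf_le: "x \<in> D \<Longrightarrow> y \<in> D \<Longrightarrow> Bf x y \<le> sqrt (Bf x x * Bf y y)"
  using Bf_CS real_le_rsqrt by blast

lemma Bf_par: "x \<in> D \<Longrightarrow> y \<in> D \<Longrightarrow> Bf (x - y) (x - y) \<le> 2 * Bf x x + 2 * Bf y y"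
proof -
  assume x: "x \<in> D" and y: "y \<in> D"
  have "Bf (x + (-1) *\<^sub>R y) (x + (-1) *\<^sub>R y) + Bf (x + 1 *\<^sub>R y) (x + 1 *\<^sub>R y) = 2 * Bf x x + 2 * Bf y y"
    using Bf_expand[OF x y, of "-1"] Bf_expand[OF x y, of 1] by simp
  moreover have "0 \<le> Bf (x + 1 *\<^sub>R y) (x + 1 *\<^sub>R y)" using x y by (intro Bf_nonneg) (auto intro: D_add D_scaleR)
  ultimately show ?thesis by simp
qed

lemma precompact_key:
  assumes wi: "wi \<in> D" "norm wi \<le> 1" "q wi \<le> C" and wj: "wj \<in> D" "norm wj \<le> 1" "q wj \<le> C"
  shows "(norm (wi - wj))\<^sup>2 \<le> sqrt ((2 * norm (Rz wi - Rz wj) + cmod (z0 - complex_of_real mu) * (norm (Rz wi - Rz wj))\<^sup>2) * (4 * (C + \<bar>mu\<bar>)))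
      + 2 * cmod (z0 - complex_of_real mu) * norm (Rz wi - Rz wj)"
proof -
  define d where "d = wi - wj"
  define u where "u = Rz d"
  define k where "k = cmod (z0 - complex_of_real mu)"
  have dD: "d \<in> D" using wi wj by (simp add: d_def D_diff)
  have uD: "u \<in> D" by (simp add: u_def Rz_mem)
  have ud: "u = Rz wi - Rz wj" by (simp add: u_def d_def Rz_diff)
  have du: "d = T u - sc z0 u" using Rz_eq[of d] by (simp add: u_def)
  have nd: "norm d \<le> 2" using wi wj norm_triangle_ineq4[of wi wj] by (simp add: d_def)
  have du2: "d = Tm u + sc (complex_of_real mu - z0) u"
    by (simp add: du Tm_def V.scale_left_diff_distrib)
  have "(norm d)\<^sup>2 = Re (ip d d)" by (simp add: Re_ip_self)
  also have "\<dots> = Bf u d + Re ((complex_of_real mu - z0) * ip u d)"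
    by (subst (1) du2) (simp add: Bf_def ip_add_left ip_sc_left)
  also have "\<dots> \<le> Bf u d + k * norm u * norm d"
  proof -
    have "Re ((complex_of_real mu - z0) * ip u d) \<le> cmod ((complex_of_real mu - z0) * ip u d)"
      by (rule complex_Re_le_cmod)
    also have "\<dots> \<le> k * (norm u * norm d)"
      unfolding norm_mult k_def using cmod_ip_le[of u d]
      by (metis mult_left_mono norm_ge_zero norm_minus_commute)
    finally show ?thesis by simp
  qed
  also have "\<dots> \<le> sqrt (Bf u u * Bf d d) + k * norm u * 2"
    using Bf_le[OF uD dD] nd by (intro add_mono mult_left_mono) (auto simp: k_def)
  also have "Bf u u \<le> 2 * norm u + k * (norm u)\<^sup>2"
  proof -
    have "Tm u = d + sc (z0 - complex_of_real mu) u"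
      by (simp add: du Tm_def V.scale_left_diff_distrib)
    hence "Bf u u = Re (ip d u) + Re ((z0 - complex_of_real mu) * ip u u)"
      by (simp add: Bf_def ip_add_left ip_sc_left)
    also have "\<dots> \<le> norm d * norm u + k * (norm u)\<^sup>2"
    proof (rule add_mono)
      show "Re (ip d u) \<le> norm d * norm u" by (rule Re_ip_le)
      have "Re ((z0 - complex_of_real mu) * ip u u) = Re (z0 - complex_of_real mu) * (norm u)\<^sup>2"
        by (simp add: ip_self)
      also have "\<dots> \<le> k * (norm u)\<^sup>2" unfolding k_def
        by (intro mult_right_mono complex_Re_le_cmod) auto
      finally show "Re ((z0 - complex_of_real mu) * ip u u) \<le> k * (norm u)\<^sup>2" .
    qed
    also have "\<dots> \<le> 2 * norm u + k * (norm u)\<^sup>2"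
      using nd by (intro add_right_mono mult_right_mono) auto
    finally show ?thesis .
  qed
  hence "sqrt (Bf u u * Bf d d) \<le> sqrt ((2 * norm u + k * (norm u)\<^sup>2) * (4 * (C + \<bar>mu\<bar>)))"
  proof -
    assume h: "Bf u u \<le> 2 * norm u + k * (norm u)\<^sup>2"
    have "Bf d d \<le> 2 * Bf wi wi + 2 * Bf wj wj" unfolding d_def using wi wj by (intro Bf_par) auto
    also have "Bf wi wi \<le> C + \<bar>mu\<bar>"
    proof -
      have "- mu * (norm wi)\<^sup>2 \<le> \<bar>mu\<bar> * 1"
        using wi by (intro order.trans[OF _ mult_left_mono[of "(norm wi)\<^sup>2" 1 "\<bar>mu\<bar>"]])
          (auto simp: power_le_one abs_if)
      thus ?thesis using wi Bf_q by simp
    qed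
    also have "Bf wj wj \<le> C + \<bar>mu\<bar>"
    proof -
      have "- mu * (norm wj)\<^sup>2 \<le> \<bar>mu\<bar> * 1"
        using wj by (intro order.trans[OF _ mult_left_mono[of "(norm wj)\<^sup>2" 1 "\<bar>mu\<bar>"]])
          (auto simp: power_le_one abs_if)
      thus ?thesis using wj Bf_q by simp
    qed
    finally have "Bf d d \<le> 4 * (C + \<bar>mu\<bar>)" by simp
    thus ?thesis using h Bf_nonneg[OF uD] Bf_nonneg[OF dD]
      by (intro real_sqrt_le_mono mult_mono) auto
  qed
  finally show ?thesis by (simp add: ud[symmetric] d_def k_def algebra_simps)
qed

lemma precompact:
  fixes w :: "nat \<Rightarrow> 'h"
  assumes w: "\<And>n. w n \<in> D" "\<And>n. norm (w n) \<le> 1" "\<And>n. q (w n) \<le> C"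
  shows "\<exists>r. strict_mono r \<and> Cauchy (w \<circ> r)"
proof -
  have "\<forall>n. Rz (w n) \<in> closure (Rz ` cball 0 1)"
  proof
    fix n
    have "w n \<in> cball 0 1" using w(2)[of n] by (simp add: mem_cball_0)
    hence "Rz (w n) \<in> Rz ` cball 0 1" by (rule imageI)
    thus "Rz (w n) \<in> closure (Rz ` cball 0 1)" by (rule subsetD[OF closure_subset])
  qed
  then obtain l r where r: "strict_mono r" "((\<lambda>n. Rz (w n)) \<circ> r) \<longlonglongrightarrow> l"
    using seq_compactE[OF compact_imp_seq_compact[OF Rz_compact], of "\<lambda>n. Rz (w n)"] by blast
  have Cu: "Cauchy ((\<lambda>n. Rz (w n)) \<circ> r)" using r(2) by (rule LIMSEQ_imp_Cauchy)
  define k where "k = cmod (z0 - complex_of_real mu)"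
  define K where "K = 4 * (C + \<bar>mu\<bar>)"
  have K0: "K \<ge> 0"
  proof -
    have "- \<bar>mu\<bar> \<le> mu * (norm (w 0))\<^sup>2"
    proof -
      have "(norm (w 0))\<^sup>2 \<le> 1" using w(2)[of 0] by (simp add: power_le_one)
      hence "\<bar>mu\<bar> * (norm (w 0))\<^sup>2 \<le> \<bar>mu\<bar> * 1" by (intro mult_left_mono) auto
      hence "\<bar>mu * (norm (w 0))\<^sup>2\<bar> \<le> \<bar>mu\<bar> * 1" by (simp add: abs_mult)
      thus ?thesis by linarith
    qed
    thus ?thesis using q_lb[OF w(1)[of 0]] w(3)[of 0] by (simp add: K_def)
  qed
  have "Cauchy (w \<circ> r)"
  proof (rule metric_CauchyI)
    fix e :: real assume e: "e > 0"
    obtain \<eta> where \<eta>: "\<eta> > 0" "\<And>t. 0 \<le> t \<Longrightarrow> t < \<eta> \<Longrightarrow> sqrt ((2*t + k*t\<^sup>2) * K) + 2*k*t < e\<^sup>2"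
      using small_aux[OF e K0, of k] by (auto simp: k_def)
    obtain N where N: "\<And>m n. m \<ge> N \<Longrightarrow> n \<ge> N \<Longrightarrow> dist (Rz (w (r m))) (Rz (w (r n))) < \<eta>"
    proof -
      have "\<forall>e>0. \<exists>M. \<forall>m\<ge>M. \<forall>n\<ge>M. dist (Rz (w (r m))) (Rz (w (r n))) < e"
        using Cu unfolding Cauchy_def by (simp add: o_def)
      hence "\<exists>M. \<forall>m\<ge>M. \<forall>n\<ge>M. dist (Rz (w (r m))) (Rz (w (r n))) < \<eta>" using \<eta>(1) by blast
      thus ?thesis using that by blast
    qed
    show "\<exists>N. \<forall>m\<ge>N. \<forall>n\<ge>N. dist ((w \<circ> r) m) ((w \<circ> r) n) < e"
    proof (intro exI allI impI)
      fix m n assume mn: "m \<ge> N" "n \<ge> N"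
      have "(norm (w (r m) - w (r n)))\<^sup>2 < e\<^sup>2"
        using precompact_key[OF w(1,2,3) w(1,2,3), of "r m" "r n"] \<eta>(2)[of "norm (Rz (w (r m)) - Rz (w (r n)))"]
          N[OF mn] by (simp add: dist_norm k_def K_def)
      thus "dist ((w \<circ> r) m) ((w \<circ> r) n) < e"
        using e by (simp add: dist_norm power_less_imp_less_base)
    qed
  qed
  thus ?thesis using r(1) by blast
qed

definition Sset :: "real \<Rightarrow> 'h set" where "Sset C = {w\<in>D. norm w \<le> 1 \<and> q w \<le> C}"

lemma Sset_tb: "Met_TC.mtotally_bounded (Sset C)"
  unfolding Met_TC.mtotally_bounded_sequentially
proof (intro conjI allI impI)
  show "Sset C \<subseteq> UNIV" by simp
  fix \<sigma> :: "nat \<Rightarrow> 'h" assume "range \<sigma> \<subseteq> Sset C"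
  hence "\<And>n. \<sigma> n \<in> D" "\<And>n. norm (\<sigma> n) \<le> 1" "\<And>n. q (\<sigma> n) \<le> C" by (auto simp: Sset_def)
  from precompact[OF this] show "\<exists>r. strict_mono r \<and> Met_TC.MCauchy (\<sigma> \<circ> r)" by simp
qed

lemma orthonormal_dist:
  assumes "orthonormal es" "i < length es" "j < length es" "i \<noteq> j"
  shows "dist (es!i) (es!j) \<ge> 1"
proof -
  have "ip (es!i) (es!i) = 1" "ip (es!j) (es!j) = 1" "ip (es!i) (es!j) = 0"
    using assms unfolding orthonormal_def by auto
  hence "(norm (es!i))\<^sup>2 = 1" "(norm (es!j))\<^sup>2 = 1" "Re (ip (es!i) (es!j)) = 0"
    by (simp_all add: norm_sq_Re)
  hence "(norm (es!i - es!j))\<^sup>2 = 2" by (simp add: norm_diff_sq)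
  hence "1 \<le> (norm (es!i - es!j))\<^sup>2" by simp
  hence "1 \<le> norm (es!i - es!j)" using power2_le_imp_le[of 1 "norm (es!i - es!j)"] by simp
  thus ?thesis by (simp add: dist_norm)
qed

lemma ortho_bound: "\<exists>M. \<forall>es. orthonormal es \<and> set es \<subseteq> Sset C \<longrightarrow> length es \<le> M"
proof -
  obtain K where K: "finite K" "K \<subseteq> Sset C" "Sset C \<subseteq> (\<Union>x\<in>K. ball x (1/2))"
    using Sset_tb[of C] unfolding Met_TC.mtotally_bounded_def by (metis mball_eq_ball half_gt_zero zero_less_one)
  have "length es \<le> card K" if es: "orthonormal es" "set es \<subseteq> Sset C" for es
  proof -
    have ex: "\<exists>x. x \<in> K \<and> es!j \<in> ball x (1/2)" if "j < length es" for j
      using K(3) es(2) that nth_mem by blast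
    define f where "f j = (SOME x. x \<in> K \<and> es!j \<in> ball x (1/2))" for j
    have f: "f j \<in> K \<and> es!j \<in> ball (f j) (1/2)" if "j < length es" for j
      unfolding f_def by (rule someI_ex) (rule ex[OF that])
    have "inj_on f {..<length es}"
    proof (rule inj_onI)
      fix i j assume ij: "i \<in> {..<length es}" "j \<in> {..<length es}" "f i = f j"
      show "i = j"
      proof (rule ccontr)
        assume "i \<noteq> j"
        hence "1 \<le> dist (es!i) (es!j)" using ij es(1) by (intro orthonormal_dist) auto
        moreover have "dist (es!i) (es!j) \<le> dist (es!i) (f i) + dist (f i) (es!j)" by (rule dist_triangle)
        moreover have "dist (es!i) (f i) < 1/2" "dist (f i) (es!j) < 1/2"
          using f[of i] f[of j] ij by (auto simp: dist_commute)
        ultimately show False by simp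
      qed
    qed
    moreover have "f ` {..<length es} \<subseteq> K" using f by auto
    ultimately have "card {..<length es} \<le> card K" using K(1) by (intro card_inj_on_le)
    thus ?thesis by simp
  qed
  thus ?thesis by blast
qed

end

lemma card_partition_image:
  assumes "finite A"
  shows "card A = (\<Sum>m\<in>f ` A. card {x\<in>A. f x = m})"
proof -
  have "A = (\<Union>m\<in>f ` A. {x\<in>A. f x = m})" by auto
  hence "card A = card (\<Union>m\<in>f ` A. {x\<in>A. f x = m})" by simp
  also have "\<dots> = (\<Sum>m\<in>f ` A. card {x\<in>A. f x = m})"
    using assms by (intro card_UN_disjoint) auto
  finally show ?thesis .
qed

context chs
begin

lemma orthonormal_iff_set:
  "orthonormal es \<longleftrightarrow> distinct es \<and> (\<forall>e\<in>set es. \<forall>f\<in>set es. ip e f = (if e = f then 1 else 0))"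
proof
  assume o: "orthonormal es"
  have d: "distinct es" using o by (rule orthonormal_distinct)
  show "distinct es \<and> (\<forall>e\<in>set es. \<forall>f\<in>set es. ip e f = (if e = f then 1 else 0))"
  proof (intro conjI ballI d)
    fix e f assume "e \<in> set es" "f \<in> set es"
    then obtain i j where ij: "i < length es" "j < length es" "e = es!i" "f = es!j" by (auto simp: in_set_conv_nth)
    have "(e = f) = (i = j)" using ij d by (simp add: nth_eq_iff_index_eq)
    thus "ip e f = (if e = f then 1 else 0)" using o ij by (simp add: orthonormal_def)
  qed
next
  assume h: "distinct es \<and> (\<forall>e\<in>set es. \<forall>f\<in>set es. ip e f = (if e = f then 1 else 0))"
  show "orthonormal es" unfolding orthonormal_def
  proof (intro allI impI)
    fix i j assume "i < length es" "j < length es"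
    thus "ip (es!i) (es!j) = (if i = j then 1 else 0)" using h by (simp add: nth_eq_iff_index_eq)
  qed
qed

lemma orthonormal_filter: "orthonormal es \<Longrightarrow> orthonormal (filter P es)"
  unfolding orthonormal_iff_set by auto

lemma lincomb_set: "distinct es \<Longrightarrow> lincomb (\<lambda>j. c (es!j)) es = (\<Sum>e\<in>set es. sc (c e) e)"
  unfolding lincomb_def using sum_set_nth[of es "\<lambda>e. sc (c e) e"] by simp

lemma proj_set: "distinct es \<Longrightarrow> proj es y = (\<Sum>e\<in>set es. sc (ip y e) e)"
  unfolding proj_def using lincomb_set[of es "\<lambda>e. ip y e"] by simp

end

context sa_op
begin

definition eiglist :: "real \<Rightarrow> 'h list \<Rightarrow> bool" where
  "eiglist g es \<longleftrightarrow> orthonormal es \<and> (\<forall>e\<in>set es. eigvec (q e) e \<and> q e < g)"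

definition maxeig :: "real \<Rightarrow> 'h list \<Rightarrow> bool" where
  "maxeig g es \<longleftrightarrow> eiglist g es \<and> (\<forall>es'. eiglist g es' \<longrightarrow> length es' \<le> length es)"

lemma eiglist_Sset: "eiglist g es \<Longrightarrow> set es \<subseteq> Sset g"
  unfolding eiglist_def Sset_def using orthonormal_norm by (auto simp: eigvec_def)

lemma maxeig_ex: "\<exists>es. maxeig g es"
proof -
  obtain M where M: "\<And>es. orthonormal es \<Longrightarrow> set es \<subseteq> Sset g \<Longrightarrow> length es \<le> M"
    using ortho_bound[of g] by blast
  define P where "P n \<longleftrightarrow> (\<exists>es. eiglist g es \<and> length es = n)" for n
  have "P 0" unfolding P_def by (intro exI[of _ "[]"]) (simp add: eiglist_def orthonormal_def)
  moreover have "\<forall>n. P n \<longrightarrow> n \<le> M" unfolding P_def using M eiglist_Sset eiglist_def by blast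
  ultimately obtain n where n: "P n" "\<forall>y. P y \<longrightarrow> y \<le> n" using Nat.ex_has_greatest_nat[of P 0 M] by blast
  then obtain es where "eiglist g es" "length es = n" unfolding P_def by blast
  thus ?thesis using n(2) unfolding maxeig_def P_def by blast
qed

definition Em where "Em m = {v. eigvec m v}"

lemma Em_subspace: "V.subspace (Em m)"
  unfolding V.subspace_def Em_def eigvec_def
  by (auto simp: D_add D_sc T_add T_sc sc_add mult.commute)

lemma eigvec_norm_q: "eigvec m e \<Longrightarrow> norm e = 1 \<Longrightarrow> q e = m"
  using q_eig by simp

lemma eiglist_D: "eiglist g es \<Longrightarrow> set es \<subseteq> D"
  unfolding eiglist_def eigvec_def by auto

lemma maxeig_span:
  assumes me: "maxeig g es" and v: "eigvec m v" and m: "m < g"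
  shows "proj es v = v"
proof (rule ccontr)
  assume ne: "proj es v \<noteq> v"
  have el: "eiglist g es" and o: "orthonormal es" using me by (auto simp: maxeig_def eiglist_def)
  have d: "distinct es" using o by (rule orthonormal_distinct)
  have "sc (ip v e) e \<in> Em m" if "e \<in> set es" for e
  proof (cases "q e = m")
    case True
    have "e \<in> Em m" using el that True by (auto simp: eiglist_def Em_def)
    thus ?thesis by (rule V.subspace_scale[OF Em_subspace])
  next
    case False
    have "eigvec (q e) e" using el that by (auto simp: eiglist_def)
    hence "ip v e = 0" using eig_orth[OF v _ ] False by metis
    thus ?thesis using Em_subspace V.subspace_0 by simp
  qed
  hence "proj es v \<in> Em m" unfolding proj_set[OF d] by (intro V.subspace_sum[OF Em_subspace])
  hence wE: "v - proj es v \<in> Em m" using v Em_subspace V.subspace_diff by (auto simp: Em_def)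
  define w where "w = v - proj es v"
  have w0: "w \<noteq> 0" using ne by (simp add: w_def)
  define e' where "e' = (1 / norm w) *\<^sub>R w"
  have "e' = sc (complex_of_real (1 / norm w)) w" by (simp only: e'_def sc_real)
  moreover have "sc (complex_of_real (1 / norm w)) w \<in> Em m"
    using wE unfolding w_def by (rule V.subspace_scale[OF Em_subspace])
  ultimately have e'E: "eigvec m e'" by (simp add: Em_def)
  have ne': "norm e' = 1" using w0 by (simp add: e'_def)
  have qe': "q e' = m" using eigvec_norm_q[OF e'E ne'] .
  have orth': "orth es e'" using orth_minus_proj[OF o, of v]
    by (simp add: orth_def e'_def w_def ip_scaleR_left)
  have "eiglist g (es @ [e'])"
    using el e'E ne' qe' m orth' orthonormal_snoc[OF o ne' orth'] by (auto simp: eiglist_def)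
  hence "length (es @ [e']) \<le> length es" using me by (auto simp: maxeig_def)
  thus False by simp
qed

lemma maxeig_eigenvalues:
  assumes me: "maxeig g es"
  shows "q ` set es = {m. m < g \<and> is_eigenvalue sc D T m}"
proof
  have el: "eiglist g es" and o: "orthonormal es" using me by (auto simp: maxeig_def eiglist_def)
  show "q ` set es \<subseteq> {m. m < g \<and> is_eigenvalue sc D T m}"
  proof
    fix m assume "m \<in> q ` set es"
    then obtain e where e: "e \<in> set es" "m = q e" by blast
    have "norm e = 1" using orthonormal_norm[OF o e(1)] .
    hence "e \<noteq> 0" by auto
    thus "m \<in> {m. m < g \<and> is_eigenvalue sc D T m}"
      using el e by (auto simp: eiglist_def is_eigenvalue_def eigvec_def)
  qed
  show "{m. m < g \<and> is_eigenvalue sc D T m} \<subseteq> q ` set es"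
  proof
    fix m assume "m \<in> {m. m < g \<and> is_eigenvalue sc D T m}"
    then obtain v where v: "eigvec m v" "v \<noteq> 0" "m < g"
      by (auto simp: is_eigenvalue_def eigvec_def)
    show "m \<in> q ` set es"
    proof (rule ccontr)
      assume nm: "m \<notin> q ` set es"
      have "ip v e = 0" if "e \<in> set es" for e
      proof -
        have "eigvec (q e) e" using el that by (auto simp: eiglist_def)
        moreover have "q e \<noteq> m" using nm that by auto
        ultimately show ?thesis using eig_orth[OF v(1)] by metis
      qed
      hence "proj es v = 0" by (simp add: proj_zero_orth orth_def)
      thus False using maxeig_span[OF me v(1) v(3)] v(2) by simp
    qed
  qed
qed

lemma maxeig_mult:
  assumes me: "maxeig g es" and m: "m < g"
  shows "eig_mult sc D T m = length (filter (\<lambda>e. q e = m) es)"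
proof -
  have el: "eiglist g es" and o: "orthonormal es" using me by (auto simp: maxeig_def eiglist_def)
  have d: "distinct es" using o by (rule orthonormal_distinct)
  define fs where "fs = filter (\<lambda>e. q e = m) es"
  have ofs: "orthonormal fs" unfolding fs_def using o by (rule orthonormal_filter)
  have dfs: "distinct fs" using ofs by (rule orthonormal_distinct)
  have EE: "{x \<in> D. T x = sc (complex_of_real m) x} = Em m" by (auto simp: Em_def eigvec_def)
  have "V.dim (Em m) = length fs"
  proof (rule dim_orthonormal[OF Em_subspace ofs])
    show "set fs \<subseteq> Em m" using el by (auto simp: fs_def eiglist_def Em_def)
    fix v assume "v \<in> Em m"
    hence v: "eigvec m v" by (simp add: Em_def)
    have "v = proj es v" using maxeig_span[OF me v m] by simp
    also have "\<dots> = (\<Sum>e\<in>set es. sc (ip v e) e)" by (rule proj_set[OF d])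
    also have "\<dots> = (\<Sum>e\<in>set fs. sc (ip v e) e)"
    proof (rule sum.mono_neutral_right)
      show "finite (set es)" by simp
      show "set fs \<subseteq> set es" by (auto simp: fs_def)
      show "\<forall>e\<in>set es - set fs. sc (ip v e) e = 0"
      proof
        fix e assume e: "e \<in> set es - set fs"
        hence "q e \<noteq> m" "eigvec (q e) e" using el by (auto simp: fs_def eiglist_def)
        hence "ip v e = 0" using eig_orth[OF v] by metis
        thus "sc (ip v e) e = 0" by simp
      qed
    qed
    also have "\<dots> = proj fs v" by (rule proj_set[OF dfs, symmetric])
    finally show "\<exists>c. v = lincomb c fs" unfolding proj_def by blast
  qed
  thus ?thesis unfolding eig_mult_def EE fs_def by simp
qed

lemma maxeig_count:
  assumes me: "maxeig g es"
  shows "length es = (\<Sum>m\<in>{m. m < g \<and> is_eigenvalue sc D T m}. eig_mult sc D T m)"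
proof -
  have el: "eiglist g es" and o: "orthonormal es" using me by (auto simp: maxeig_def eiglist_def)
  have d: "distinct es" using o by (rule orthonormal_distinct)
  have "length es = card (set es)" using distinct_card[OF d] by simp
  also have "\<dots> = (\<Sum>m\<in>q ` set es. card {x\<in>set es. q x = m})" by (rule card_partition_image) simp
  also have "\<dots> = (\<Sum>m\<in>q ` set es. eig_mult sc D T m)"
  proof (rule sum.cong[OF refl])
    fix m assume "m \<in> q ` set es"
    hence "m < g" using el by (auto simp: eiglist_def)
    hence "eig_mult sc D T m = length (filter (\<lambda>e. q e = m) es)" by (rule maxeig_mult[OF me])
    also have "\<dots> = card {x\<in>set es. q x = m}" using distinct_length_filter[OF d] by (simp add: Int_def conj_commute)
    finally show "card {x\<in>set es. q x = m} = eig_mult sc D T m" by simp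
  qed
  finally show ?thesis using maxeig_eigenvalues[OF me] by simp
qed

lemma eigenvalues_finite: "finite {m. m < g \<and> is_eigenvalue sc D T m}"
proof -
  obtain es where "maxeig g es" using maxeig_ex by blast
  from maxeig_eigenvalues[OF this] show ?thesis by (metis finite_imageI finite_set)
qed

end

context sa_op
begin

lemma T_sum: "(\<And>a. a \<in> S \<Longrightarrow> f a \<in> D) \<Longrightarrow> T (sum f S) = (\<Sum>a\<in>S. T (f a))"
proof (induction S rule: infinite_finite_induct)
  case (insert x F)
  have "sum f F \<in> D" using insert by (intro V.subspace_sum[OF subD]) auto
  thus ?case using insert by (simp add: T_add)
qed auto

definition Tc :: "real \<Rightarrow> 'h \<Rightarrow> 'h" where "Tc c x = T x - sc (complex_of_real c) x"

lemma Tc_add: "x \<in> D \<Longrightarrow> y \<in> D \<Longrightarrow> Tc c (x + y) = Tc c x + Tc c y"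
  by (simp add: Tc_def T_add sc_add)
lemma Tc_scaleR: "x \<in> D \<Longrightarrow> Tc c (r *\<^sub>R x) = r *\<^sub>R Tc c x"
  by (simp add: Tc_def T_scaleR scaleR_diff_right) (metis sc_real sc_sc mult.commute)

definition Bg :: "real \<Rightarrow> 'h \<Rightarrow> 'h \<Rightarrow> real" where
  "Bg c x y = Re (ip (Tc c x) y)"

lemma Bg_sym: "x \<in> D \<Longrightarrow> y \<in> D \<Longrightarrow> Bg c x y = Bg c y x"
proof -
  assume x: "x \<in> D" and y: "y \<in> D"
  have "Re (ip (T x) y) = Re (ip (T y) x)"
    using T_sym[OF y x] Re_ip_sym[of "T x" y] by simp
  moreover have "Re (ip x y) = Re (ip y x)" by (rule Re_ip_sym[symmetric])
  ultimately show ?thesis by (simp add: Bg_def Tc_def ip_diff_left ip_sc_left)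
qed

lemma Bg_self: "Bg c x x = q x - c * (norm x)\<^sup>2"
  by (simp add: Bg_def Tc_def q_def ip_diff_left ip_sc_left Re_ip_self)

lemma Bg_expand:
  assumes "x \<in> D" "y \<in> D"
  shows "Bg c (x + t *\<^sub>R y) (x + t *\<^sub>R y) = Bg c x x + 2 * Bg c x y * t + Bg c y y * t\<^sup>2"
proof -
  have "Bg c (x + t *\<^sub>R y) (x + t *\<^sub>R y) = Bg c x x + t * Bg c x y + t * Bg c y x + t * t * Bg c y y"
    using assms by (simp add: Bg_def Tc_add Tc_scaleR D_scaleR ip_add_left ip_add_right
        ip_scaleR_left ip_scaleR_right algebra_simps)
  thus ?thesis using Bg_sym[OF assms] by (simp add: power2_eq_square algebra_simps)
qed

lemma T_lincomb_eig:
  assumes el: "eiglist g es"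
  shows "T (lincomb c es) = lincomb (\<lambda>j. c j * complex_of_real (q (es!j))) es"
proof -
  have eD: "es!j \<in> D" if "j < length es" for j using eiglist_D[OF el] that nth_mem by blast
  have ev: "T (es!j) = sc (complex_of_real (q (es!j))) (es!j)" if "j < length es" for j
    using el that nth_mem unfolding eiglist_def eigvec_def by blast
  have "T (lincomb c es) = (\<Sum>j<length es. T (sc (c j) (es!j)))"
    unfolding lincomb_def using eD by (intro T_sum) (auto intro: D_sc)
  also have "\<dots> = (\<Sum>j<length es. sc (c j * complex_of_real (q (es!j))) (es!j))"
    using eD ev by (intro sum.cong) (auto simp: T_sc)
  finally show ?thesis by (simp add: lincomb_def)
qed

lemma ip_lincomb_orth: "orth es y \<Longrightarrow> ip (lincomb c es) y = 0"
proof -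
  assume o: "orth es y"
  have "ip (es!j) y = 0" if "j < length es" for j
    using o that nth_mem unfolding orth_def by (metis ip_cnj complex_cnj_zero)
  thus ?thesis by (simp add: lincomb_def ip_sum_left ip_sc_left)
qed

lemma orth_add: "orth es a \<Longrightarrow> orth es b \<Longrightarrow> orth es (a + b)"
  by (simp add: orth_def ip_add_left)
lemma orth_sc: "orth es a \<Longrightarrow> orth es (sc c a)"
  by (simp add: orth_def ip_sc_left)
lemma orth_scaleR: "orth es a \<Longrightarrow> orth es (r *\<^sub>R a)"
  by (simp add: orth_def ip_scaleR_left)

lemma q_scaleR: "x \<in> D \<Longrightarrow> q (r *\<^sub>R x) = r\<^sup>2 * q x"
  by (simp add: q_def T_scaleR ip_scaleR_left ip_scaleR_right power2_eq_square)

lemma variational: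
  assumes me: "maxeig g es" and w: "w \<in> D" and ow: "orth es w"
  shows "g * (norm w)\<^sup>2 \<le> q w"
proof (rule ccontr)
  assume "\<not> g * (norm w)\<^sup>2 \<le> q w"
  hence lt: "q w < g * (norm w)\<^sup>2" by simp
  have el: "eiglist g es" and o: "orthonormal es" using me by (auto simp: maxeig_def eiglist_def)
  have esD: "set es \<subseteq> D" by (rule eiglist_D[OF el])
  define Vs where "Vs = {v\<in>D. orth es v}"
  have w0: "w \<noteq> 0" using lt by (auto simp: q_def)
  define U where "U = q ` {v\<in>Vs. norm v = 1}"
  define w1 where "w1 = (1 / norm w) *\<^sub>R w"
  have w1: "w1 \<in> Vs" "norm w1 = 1" using w ow w0 by (auto simp: w1_def Vs_def D_scaleR orth_scaleR)
  have qw1: "q w1 < g"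
  proof -
    have "q w1 = q w / (norm w)\<^sup>2" using w by (simp add: w1_def q_scaleR power_divide)
    also have "\<dots> < g" using lt w0 by (simp add: divide_less_eq)
    finally show ?thesis .
  qed
  have Une: "U \<noteq> {}" using w1 by (auto simp: U_def)
  have Ubdd: "bdd_below U"
  proof (rule bdd_belowI[of _ mu])
    fix x assume "x \<in> U"
    then obtain v where "v \<in> D" "norm v = 1" "x = q v" by (auto simp: U_def Vs_def)
    thus "mu \<le> x" using q_lb[of v] by simp
  qed
  define m0 where "m0 = Inf U"
  have m0le: "m0 \<le> q v" if "v \<in> Vs" "norm v = 1" for v
    unfolding m0_def using Ubdd that by (intro cInf_lower) (auto simp: U_def)
  have m0g: "m0 < g" using m0le[OF w1] qw1 by simp
  have nonneg: "m0 * (norm v)\<^sup>2 \<le> q v" if v: "v \<in> Vs" for v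
  proof (cases "v = 0")
    case True thus ?thesis by (simp add: q_def)
  next
    case False
    define v1 where "v1 = (1 / norm v) *\<^sub>R v"
    have "v1 \<in> Vs" "norm v1 = 1" using v False by (auto simp: v1_def Vs_def D_scaleR orth_scaleR)
    hence "m0 \<le> q v1" by (rule m0le)
    also have "q v1 = q v / (norm v)\<^sup>2" using v by (simp add: v1_def q_scaleR power_divide Vs_def)
    finally show ?thesis using False by (simp add: le_divide_eq)
  qed
  have "\<exists>v. v \<in> Vs \<and> norm v = 1 \<and> q v < m0 + 1 / Suc n" for n
  proof -
    have "m0 < m0 + 1 / Suc n" by simp
    then obtain x where "x \<in> U" "x < m0 + 1 / Suc n"
      using cInf_less_iff[OF Une Ubdd] unfolding m0_def by blast
    thus ?thesis by (auto simp: U_def)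
  qed
  then obtain s where s: "\<And>n. s n \<in> Vs" "\<And>n. norm (s n) = 1" "\<And>n. q (s n) < m0 + 1 / Suc n" by metis
  have sD: "s n \<in> D" for n using s(1) by (simp add: Vs_def)
  have qs1: "q (s n) \<le> m0 + 1" for n
  proof -
    have "1 / real (Suc n) \<le> 1" by simp
    thus ?thesis using s(3)[of n] by linarith
  qed
  have ns1: "norm (s n) \<le> 1" for n using s(2)[of n] by simp
  obtain r where r: "strict_mono r" "Cauchy (s \<circ> r)"
    using precompact[of s "m0 + 1", OF sD ns1 qs1] by blast
  define t where "t n = s (r n)" for n
  obtain y where y: "t \<longlonglongrightarrow> y" using r(2) Cauchy_convergent_iff convergent_def unfolding t_def o_def by blast
  have tD: "t n \<in> D" "orth es (t n)" "norm (t n) = 1" for n using s by (auto simp: t_def Vs_def)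
  have qt: "(\<lambda>n. q (t n)) \<longlonglongrightarrow> m0"
  proof (rule tendsto_sandwich[of "\<lambda>n. m0" _ _ "\<lambda>n. m0 + 1 / Suc n"])
    show "\<forall>\<^sub>F n in sequentially. m0 \<le> q (t n)" using tD m0le s(1) by (auto simp: t_def)
    show "\<forall>\<^sub>F n in sequentially. q (t n) \<le> m0 + 1 / Suc n"
    proof (rule always_eventually, rule allI)
      fix n
      have "n \<le> r n" using r(1) by (rule seq_suble)
      hence "1 / real (Suc (r n)) \<le> 1 / Suc n" by (intro divide_left_mono) auto
      thus "q (t n) \<le> m0 + 1 / Suc n" using s(3)[of "r n"] by (simp add: t_def)
    qed
    show "(\<lambda>n. m0) \<longlonglongrightarrow> m0" by simp
    show "(\<lambda>n. m0 + 1 / Suc n) \<longlonglongrightarrow> m0" using tendsto_add[OF tendsto_const lim_one_over_Suc, of m0] by simp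
  qed
  have ny: "norm y = 1"
  proof -
    have "(\<lambda>n. norm (t n)) \<longlonglongrightarrow> norm y" using y by (rule tendsto_norm)
    thus ?thesis using tD(3) by (simp add: LIMSEQ_const_iff)
  qed
  have oy: "orth es y" unfolding orth_def
  proof
    fix e assume e: "e \<in> set es"
    have "(\<lambda>n. ip (t n) e) \<longlonglongrightarrow> ip y e" using y by (intro tendsto_intros)
    moreover have "ip (t n) e = 0" for n using tD(2)[of n] e by (simp add: orth_def)
    ultimately show "ip y e = 0" by (simp add: LIMSEQ_const_iff)
  qed
  have EL: "Bg m0 v y = 0" if v: "v \<in> Vs" for v
  proof -
    have vD: "v \<in> D" using v by (simp add: Vs_def)
    have "0 \<le> 2 * Bg m0 v y * tt + Bg m0 v v * tt\<^sup>2" for tt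
    proof -
      have lim: "(\<lambda>n. Bg m0 (t n) (t n) + 2 * Bg m0 v (t n) * tt + Bg m0 v v * tt\<^sup>2)
          \<longlonglongrightarrow> 0 + 2 * Bg m0 v y * tt + Bg m0 v v * tt\<^sup>2"
      proof (intro tendsto_intros)
        show "(\<lambda>n. Bg m0 (t n) (t n)) \<longlonglongrightarrow> 0"
          using tendsto_diff[OF qt tendsto_const[of m0]] tD(3) by (simp add: Bg_self)
        show "(\<lambda>n. Bg m0 v (t n)) \<longlonglongrightarrow> Bg m0 v y"
          unfolding Bg_def using y by (intro tendsto_intros)
      qed
      have "0 \<le> Bg m0 (t n) (t n) + 2 * Bg m0 v (t n) * tt + Bg m0 v v * tt\<^sup>2" for n
      proof -
        have "t n + tt *\<^sub>R v \<in> Vs" using tD v by (auto simp: Vs_def D_add D_scaleR orth_add orth_scaleR)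
        hence "0 \<le> Bg m0 (t n + tt *\<^sub>R v) (t n + tt *\<^sub>R v)" using nonneg by (simp add: Bg_self)
        thus ?thesis using Bg_expand[OF tD(1) vD] Bg_sym[OF tD(1) vD] by simp
      qed
      hence "0 \<le> 0 + 2 * Bg m0 v y * tt + Bg m0 v v * tt\<^sup>2"
        using lim by (intro tendsto_lowerbound[OF _ _ sequentially_bot]) auto
      thus ?thesis by simp
    qed
    hence "2 * Bg m0 v y = 0" by (intro quad_zero[of _ "Bg m0 v v"]) simp
    thus ?thesis by simp
  qed
  define L where "L x = T x - sc (complex_of_real m0) x" for x
  have ipL_Vs: "ip (L v) y = 0" if v: "v \<in> Vs" for v
  proof -
    have vD: "v \<in> D" using v by (simp add: Vs_def)
    have re: "Re (ip (L v) y) = 0" using EL[OF v] by (simp add: Bg_def L_def Tc_def)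
    have "sc \<i> v \<in> Vs" using v by (auto simp: Vs_def D_sc orth_sc)
    hence "Bg m0 (sc \<i> v) y = 0" by (rule EL)
    hence r2: "Re (ip (L (sc \<i> v)) y) = 0" by (simp only: Bg_def L_def Tc_def)
    have "L (sc \<i> v) = sc \<i> (L v)" using vD by (simp add: L_def T_sc sc_diff mult.commute)
    hence "Re (\<i> * ip (L v) y) = 0" using r2 by (simp add: ip_sc_left)
    hence "Im (ip (L v) y) = 0" by simp
    thus ?thesis using re by (simp add: complex_eq_iff)
  qed
  have ipL_e: "ip (L e) y = 0" if e: "e \<in> set es" for e
  proof -
    have "L e = sc (complex_of_real (q e - m0)) e"
      using el e by (auto simp: L_def eiglist_def eigvec_def V.scale_left_diff_distrib)
    moreover have "ip e y = 0" using oy e unfolding orth_def by (metis ip_cnj complex_cnj_zero)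
    ultimately show ?thesis by (simp add: ip_sc_left)
  qed
  have ipL: "ip (L x) y = 0" if x: "x \<in> D" for x
  proof -
    have PD: "proj es x \<in> D" using esD by (intro proj_in_subspace[OF subD])
    have xV: "x - proj es x \<in> Vs" using x PD o by (auto simp: Vs_def D_diff orth_minus_proj)
    have Ldiff: "L x = L (x - proj es x) + L (proj es x)"
      using x PD by (simp add: L_def T_diff D_diff sc_diff)
    have "L (proj es x) = (\<Sum>e\<in>set es. sc (ip x e) (L e))"
    proof -
      have d: "distinct es" using o by (rule orthonormal_distinct)
      have "T (proj es x) = (\<Sum>e\<in>set es. T (sc (ip x e) e))"
        unfolding proj_set[OF d] using esD by (intro T_sum) (auto intro: D_sc)
      also have "\<dots> = (\<Sum>e\<in>set es. sc (ip x e) (T e))"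
        using esD by (intro sum.cong) (auto simp: T_sc)
      finally have "T (proj es x) = (\<Sum>e\<in>set es. sc (ip x e) (T e))" .
      thus ?thesis unfolding L_def proj_set[OF d]
        by (simp add: V.scale_sum_right sum_subtractf sc_diff mult.commute)
    qed
    hence "ip (L (proj es x)) y = 0" using ipL_e by (simp add: ip_sum_left ip_sc_left)
    thus ?thesis using Ldiff ipL_Vs[OF xV] by (simp add: ip_add_left)
  qed
  have "y \<in> D \<and> T y = sc (complex_of_real m0) y"
  proof (rule T_adj)
    fix x assume "x \<in> D"
    hence "ip (T x) y - complex_of_real m0 * ip x y = 0" using ipL by (simp add: L_def ip_diff_left ip_sc_left)
    thus "ip (T x) y = ip x (sc (complex_of_real m0) y)" by (simp add: ip_sc_right)
  qed
  hence "eigvec m0 y" by (simp add: eigvec_def)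
  hence "proj es y = y" using maxeig_span[OF me _ m0g] by simp
  moreover have "proj es y = 0" using oy by (rule proj_zero_orth)
  ultimately show False using ny by simp
qed

end

definition hh :: "real \<Rightarrow> real \<Rightarrow> real" where "hh s m = - m * (m + s) / (m\<^sup>2 + 1)"

lemma hh_id: "a / (m\<^sup>2 + 1) - s * (a * m / (m\<^sup>2 + 1)) - a = a * hh s m"
proof -
  have pos: "m\<^sup>2 + 1 > 0" by (simp add: add_nonneg_pos)
  have "a / (m\<^sup>2 + 1) - s * (a * m / (m\<^sup>2 + 1)) - a = (a - s * a * m - a * (m\<^sup>2 + 1)) / (m\<^sup>2 + 1)"
    using pos by (simp add: diff_divide_distrib)
  also have "a - s * a * m - a * (m\<^sup>2 + 1) = a * (- m * (m + s))" by (simp add: algebra_simps power2_eq_square)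
  finally show ?thesis by (simp add: hh_def)
qed

lemma cmod_mi_sq: "(cmod (complex_of_real m - \<i>))\<^sup>2 = m\<^sup>2 + 1"
  by (simp add: cmod_power2)

lemma term_norm: "(cmod (c / (complex_of_real m - \<i>)))\<^sup>2 = (cmod c)\<^sup>2 / (m\<^sup>2 + 1)"
  by (simp add: norm_divide power_divide cmod_mi_sq)

lemma term_re: "Re (c * cnj c / (complex_of_real m - \<i>)) = (cmod c)\<^sup>2 * m / (m\<^sup>2 + 1)"
proof -
  have "c * cnj c = complex_of_real ((cmod c)\<^sup>2)" by (rule complex_norm_square[symmetric])
  hence "c * cnj c / (complex_of_real m - \<i>) = complex_of_real ((cmod c)\<^sup>2) / (complex_of_real m - \<i>)" by simp
  also have "Re \<dots> = (cmod c)\<^sup>2 * m / (m\<^sup>2 + 1)" by (simp add: Re_divide)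
  finally show ?thesis .
qed

context sa_op
begin

lemma q_eq: "q = (\<lambda>y. Re (ip (T y) y))" by (rule ext) (simp add: q_def)

lemma form_on_D:
  assumes fc: "is_form_closure D q Df f" and x: "x \<in> D"
  shows "x \<in> Df \<and> f x = q x"
proof -
  have "q 0 = 0" by (simp add: q_def)
  hence fcv: "form_convergent D q (\<lambda>n. x) x" using x by (simp add: form_convergent_def)
  hence "(\<lambda>n. q x) \<longlonglongrightarrow> f x" using fc unfolding is_form_closure_def by blast
  hence "f x = q x" by (simp add: LIMSEQ_const_iff)
  moreover have "x \<in> Df" using fc fcv unfolding is_form_closure_def by blast
  ultimately show ?thesis by simp
qed

lemma form_variational:
  assumes fc: "is_form_closure D q Df f" and me: "maxeig g es" and y: "y \<in> Df" and oy: "orth es y"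
  shows "g * (norm y)\<^sup>2 \<le> f y"
proof -
  have el: "eiglist g es" and o: "orthonormal es" using me by (auto simp: maxeig_def eiglist_def)
  have esD: "set es \<subseteq> D" by (rule eiglist_D[OF el])
  obtain s where s: "form_convergent D q s y" using fc y unfolding is_form_closure_def by blast
  have sD: "s n \<in> D" for n using s by (simp add: form_convergent_def)
  have sy: "s \<longlonglongrightarrow> y" using s by (simp add: form_convergent_def)
  have qf: "(\<lambda>n. q (s n)) \<longlonglongrightarrow> f y" using fc s unfolding is_form_closure_def by blast
  define P where "P n = proj es (s n)" for n
  define s' where "s' n = s n - P n" for n
  have PD: "P n \<in> D" for n unfolding P_def using esD by (intro proj_in_subspace[OF subD])
  have s'D: "s' n \<in> D" for n by (simp add: s'_def D_diff sD PD)
  have os': "orth es (s' n)" for n unfolding s'_def P_def by (rule orth_minus_proj[OF o])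
  have Py: "proj es y = 0" using oy by (rule proj_zero_orth)
  have P0: "P \<longlonglongrightarrow> 0" unfolding P_def using tendsto_proj[OF sy, of es] Py by simp
  have s'y: "s' \<longlonglongrightarrow> y" unfolding s'_def using tendsto_diff[OF sy P0] by simp
  have TP: "T (P n) = lincomb (\<lambda>j. ip (s n) (es!j) * complex_of_real (q (es!j))) es" for n
    unfolding P_def proj_def by (rule T_lincomb_eig[OF el])
  have TP0: "(\<lambda>n. T (P n)) \<longlonglongrightarrow> 0"
  proof -
    have "(\<lambda>n. lincomb (\<lambda>j. ip (s n) (es!j) * complex_of_real (q (es!j))) es)
        \<longlonglongrightarrow> lincomb (\<lambda>j. ip y (es!j) * complex_of_real (q (es!j))) es"
      using sy by (intro tendsto_lincomb tendsto_intros)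
    moreover have "lincomb (\<lambda>j. ip y (es!j) * complex_of_real (q (es!j))) es = 0"
      using oy by (simp add: lincomb_def orth_def)
    ultimately show ?thesis using TP by simp
  qed
  have qP0: "(\<lambda>n. q (P n)) \<longlonglongrightarrow> 0"
  proof -
    have "(\<lambda>n. Re (ip (T (P n)) (P n))) \<longlonglongrightarrow> Re (ip 0 0)"
      using TP0 P0 by (intro tendsto_intros)
    thus ?thesis by (simp add: q_def)
  qed
  have split: "q (s n) = q (s' n) + q (P n)" for n
  proof -
    have "Bg 0 (P n) (s' n) = Re (ip (T (P n)) (s' n))" by (simp add: Bg_def Tc_def)
    also have "\<dots> = 0" unfolding TP using ip_lincomb_orth[OF os'] by simp
    finally have "Bg 0 (s' n) (P n) = 0" using Bg_sym[OF PD s'D] by simp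
    moreover have "s n = s' n + 1 *\<^sub>R P n" by (simp add: s'_def)
    ultimately show ?thesis using Bg_expand[OF s'D[of n] PD[of n], of 0 1] by (simp add: Bg_self)
  qed
  have lb: "g * (norm (s' n))\<^sup>2 + q (P n) \<le> q (s n)" for n
    using variational[OF me s'D os'] split[of n] by simp
  have "(\<lambda>n. g * (norm (s' n))\<^sup>2 + q (P n)) \<longlonglongrightarrow> g * (norm y)\<^sup>2 + 0"
    using s'y qP0 by (intro tendsto_intros)
  hence "g * (norm y)\<^sup>2 + 0 \<le> f y"
    using qf lb by (intro tendsto_le[OF sequentially_bot qf]) auto
  thus ?thesis by simp
qed

definition Q :: "real \<Rightarrow> 'h \<Rightarrow> real" where
  "Q s y = (norm (R y))\<^sup>2 - s * Re (ip (R y) y)"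

lemma Re_ip_R: "Re (ip (R y) y) = q (R y)"
proof -
  have "ip (R y) y = ip (R y) (T (R y)) - ip (R y) (sc \<i> (R y))"
    using R_eq[of y] by (metis ip_diff_right)
  hence "Re (ip (R y) y) = Re (ip (R y) (T (R y)))" by (simp add: ip_sc_right ip_self)
  also have "\<dots> = q (R y)" by (simp add: q_def Re_ip_sym)
  finally show ?thesis .
qed

lemma norm_y_R: "(norm (R y))\<^sup>2 \<le> (norm y)\<^sup>2"
  using R_norm[of y] by (simp add: power_mono)

lemma orth_R:
  assumes el: "eiglist g es" and oy: "orth es y"
  shows "orth es (R y)"
  unfolding orth_def
proof
  fix e assume e: "e \<in> set es"
  have ev: "eigvec (q e) e" using el e by (simp add: eiglist_def)
  have "ip y e = ip (T (R y)) e - ip (sc \<i> (R y)) e" using R_eq[of y] by (metis ip_diff_left)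
  also have "ip (T (R y)) e = ip (R y) (T e)" using ev R_mem by (simp add: eigvec_def T_sym)
  also have "\<dots> = complex_of_real (q e) * ip (R y) e" using ev by (simp add: eigvec_def ip_sc_right)
  finally have "ip y e = (complex_of_real (q e) - \<i>) * ip (R y) e" by (simp add: ip_sc_left algebra_simps)
  moreover have "ip y e = 0" using oy e by (simp add: orth_def)
  moreover have "complex_of_real (q e) - \<i> \<noteq> 0" by (simp add: complex_eq_iff)
  ultimately show "ip (R y) e = 0" by simp
qed

lemma Q_orth0:
  assumes me: "maxeig 0 es" and oy: "orth es y" and s: "0 \<le> s"
  shows "Q s y \<le> (norm y)\<^sup>2"
proof -
  have el: "eiglist 0 es" using me by (simp add: maxeig_def)
  have "0 * (norm (R y))\<^sup>2 \<le> q (R y)" by (rule variational[OF me R_mem orth_R[OF el oy]])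
  hence "0 \<le> s * q (R y)" using s by simp
  moreover have "(norm (R y))\<^sup>2 \<le> (norm y)\<^sup>2" by (rule norm_y_R)
  ultimately show ?thesis unfolding Q_def Re_ip_R by linarith
qed

lemma Q_gap:
  assumes me: "maxeig g es" and oy: "orth es y" and g: "0 < g" and s: "0 < s"
  shows "Q s y \<le> (1 - min (s * g) 1) * (norm y)\<^sup>2"
proof -
  have el: "eiglist g es" using me by (simp add: maxeig_def)
  have "g * (norm (R y))\<^sup>2 \<le> q (R y)" by (rule variational[OF me R_mem orth_R[OF el oy]])
  hence "s * (g * (norm (R y))\<^sup>2) \<le> s * q (R y)" using s by simp
  hence "Q s y \<le> (1 - s * g) * (norm (R y))\<^sup>2" by (simp add: Q_def Re_ip_R algebra_simps)
  also have "\<dots> \<le> (1 - min (s * g) 1) * (norm (R y))\<^sup>2" by (intro mult_right_mono) auto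
  also have "\<dots> \<le> (1 - min (s * g) 1) * (norm y)\<^sup>2" by (intro mult_left_mono norm_y_R) auto
  finally show ?thesis .
qed

lemma R_sum: "R (sum f S) = (\<Sum>a\<in>S. R (f a))"
proof (induction S rule: infinite_finite_induct)
  case (infinite A) thus ?case using R_diff[of 0 0] by simp
next
  case empty thus ?case using R_diff[of 0 0] by simp
next
  case (insert x F) thus ?case by (simp add: R_add)
qed

lemma R_lincomb:
  assumes el: "eiglist g es"
  shows "R (lincomb c es) = lincomb (\<lambda>j. c j / (complex_of_real (q (es!j)) - \<i>)) es"
proof -
  have ev: "eigvec (q (es!j)) (es!j)" if "j < length es" for j using el that nth_mem by (auto simp: eiglist_def)
  have "R (lincomb c es) = (\<Sum>j<length es. R (sc (c j) (es!j)))" by (simp add: lincomb_def R_sum)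
  also have "\<dots> = (\<Sum>j<length es. sc (c j / (complex_of_real (q (es!j)) - \<i>)) (es!j))"
  proof (rule sum.cong[OF refl])
    fix j assume "j \<in> {..<length es}"
    hence "R (es!j) = sc (1 / (complex_of_real (q (es!j)) - \<i>)) (es!j)" using ev by (intro R_eig) auto
    thus "R (sc (c j) (es!j)) = sc (c j / (complex_of_real (q (es!j)) - \<i>)) (es!j)"
      by (simp add: R_sc)
  qed
  finally show ?thesis by (simp add: lincomb_def)
qed

lemma Q_lincomb:
  assumes el: "eiglist g es"
  shows "Q s (lincomb c es) - (norm (lincomb c es))\<^sup>2 = (\<Sum>j<length es. (cmod (c j))\<^sup>2 * hh s (q (es!j)))"
proof -
  have o: "orthonormal es" using el by (simp add: eiglist_def)
  define m where "m j = q (es!j)" for j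
  have "(norm (R (lincomb c es)))\<^sup>2 = (\<Sum>j<length es. (cmod (c j))\<^sup>2 / ((m j)\<^sup>2 + 1))"
    by (simp add: R_lincomb[OF el] norm_lincomb_sq[OF o] term_norm m_def)
  moreover have "Re (ip (R (lincomb c es)) (lincomb c es)) = (\<Sum>j<length es. (cmod (c j))\<^sup>2 * m j / ((m j)\<^sup>2 + 1))"
    by (simp add: R_lincomb[OF el] ip_lincomb_lincomb[OF o] Re_sum term_re m_def)
  moreover have "(norm (lincomb c es))\<^sup>2 = (\<Sum>j<length es. (cmod (c j))\<^sup>2)" by (rule norm_lincomb_sq[OF o])
  ultimately have "Q s (lincomb c es) - (norm (lincomb c es))\<^sup>2 =
      (\<Sum>j<length es. (cmod (c j))\<^sup>2 / ((m j)\<^sup>2 + 1) - s * ((cmod (c j))\<^sup>2 * m j / ((m j)\<^sup>2 + 1)) - (cmod (c j))\<^sup>2)"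
    by (simp add: Q_def sum_subtractf sum_distrib_left)
  also have "\<dots> = (\<Sum>j<length es. (cmod (c j))\<^sup>2 * hh s (m j))"
  proof (rule sum.cong[OF refl])
    fix j
    show "(cmod (c j))\<^sup>2 / ((m j)\<^sup>2 + 1) - s * ((cmod (c j))\<^sup>2 * m j / ((m j)\<^sup>2 + 1)) - (cmod (c j))\<^sup>2 =
        (cmod (c j))\<^sup>2 * hh s (m j)" by (rule hh_id)
  qed
  finally show ?thesis by (simp add: m_def)
qed

lemma Q_neg_span:
  assumes el: "eiglist 0 es" and sb: "\<And>e. e \<in> set es \<Longrightarrow> - s < q e"
  shows "\<exists>\<delta>>0. \<forall>c. (1 + \<delta>) * (norm (lincomb c es))\<^sup>2 \<le> Q s (lincomb c es)"
proof -
  have o: "orthonormal es" using el by (simp add: eiglist_def)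
  define \<delta> where "\<delta> = Min (insert 1 ((\<lambda>j. hh s (q (es!j))) ` {..<length es}))"
  have hpos: "hh s (q (es!j)) > 0" if "j < length es" for j
  proof -
    have "q (es!j) < 0" "- s < q (es!j)" using el sb that nth_mem by (auto simp: eiglist_def)
    hence "- q (es!j) * (q (es!j) + s) > 0" by (intro mult_pos_pos) auto
    moreover have "(q (es!j))\<^sup>2 + 1 > 0" by (simp add: add_nonneg_pos)
    ultimately have "- q (es!j) * (q (es!j) + s) / ((q (es!j))\<^sup>2 + 1) > 0" by (rule divide_pos_pos)
    thus ?thesis by (simp only: hh_def)
  qed
  have \<delta>pos: "\<delta> > 0" unfolding \<delta>_def using hpos by (subst Min_gr_iff) auto
  have \<delta>le: "\<delta> \<le> hh s (q (es!j))" if "j < length es" for j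
    unfolding \<delta>_def using that by (intro Min_le) auto
  have "(1 + \<delta>) * (norm (lincomb c es))\<^sup>2 \<le> Q s (lincomb c es)" for c
  proof -
    have "\<delta> * (norm (lincomb c es))\<^sup>2 = (\<Sum>j<length es. (cmod (c j))\<^sup>2 * \<delta>)"
      by (simp add: norm_lincomb_sq[OF o] sum_distrib_left mult.commute)
    also have "\<dots> \<le> (\<Sum>j<length es. (cmod (c j))\<^sup>2 * hh s (q (es!j)))"
      using \<delta>le by (intro sum_mono mult_left_mono) auto
    also have "\<dots> = Q s (lincomb c es) - (norm (lincomb c es))\<^sup>2" by (rule Q_lincomb[OF el, symmetric])
    finally show ?thesis by (simp add: algebra_simps)
  qed
  thus ?thesis using \<delta>pos by blast
qed

end

context sa_op
begin

lemma eiglist_lb: "eiglist g es \<Longrightarrow> e \<in> set es \<Longrightarrow> mu \<le> q e"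
  using q_lb[of e] orthonormal_norm[of es e] eiglist_D[of g es] unfolding eiglist_def by auto

lemma eig_mult_pos:
  assumes "is_eigenvalue sc D T m"
  shows "1 \<le> eig_mult sc D T m"
proof -
  obtain es where me: "maxeig (m + 1) es" using maxeig_ex by blast
  have "m \<in> q ` set es" using maxeig_eigenvalues[OF me] assms by simp
  then obtain e where e: "e \<in> set es" "q e = m" by blast
  have "eig_mult sc D T m = length (filter (\<lambda>e. q e = m) es)" by (rule maxeig_mult[OF me]) simp
  moreover have "filter (\<lambda>e. q e = m) es \<noteq> []" using e by (auto simp: filter_empty_conv)
  ultimately show ?thesis by (simp add: Suc_le_eq)
qed

lemma not_eig_mult: "\<not> is_eigenvalue sc D T m \<Longrightarrow> eig_mult sc D T m = 0"
proof -
  assume ne: "\<not> is_eigenvalue sc D T m"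
  have EE: "{x \<in> D. T x = sc (complex_of_real m) x} = Em m" by (auto simp: Em_def eigvec_def)
  have "V.dim (Em m) = length ([] :: 'h list)"
  proof (rule dim_orthonormal[OF Em_subspace])
    show "orthonormal []" by (simp add: orthonormal_def)
    fix v assume "v \<in> Em m"
    hence "v = 0" using ne by (auto simp: Em_def eigvec_def is_eigenvalue_def)
    thus "\<exists>c. v = lincomb c []" by (simp add: lincomb_def)
  qed simp
  thus ?thesis unfolding eig_mult_def EE by simp
qed

definition nuc :: nat where "nuc = (\<Sum>m\<in>{m. m < 0 \<and> is_eigenvalue sc D T m}. eig_mult sc D T m)"

lemma gap_ex: "\<exists>g>0. {m. m < g \<and> is_eigenvalue sc D T m} = {m. m \<le> 0 \<and> is_eigenvalue sc D T m}"
proof -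
  define P where "P = {m. 0 < m \<and> m < 1 \<and> is_eigenvalue sc D T m}"
  have fP: "finite P" using eigenvalues_finite[of 1] by (rule rev_finite_subset) (auto simp: P_def)
  define g where "g = Min (insert 1 P)"
  have g0: "g > 0" unfolding g_def using fP by (subst Min_gr_iff) (auto simp: P_def)
  have gle: "g \<le> x" if "x \<in> insert 1 P" for x unfolding g_def using fP that by (intro Min_le) auto
  have "{m. m < g \<and> is_eigenvalue sc D T m} = {m. m \<le> 0 \<and> is_eigenvalue sc D T m}"
  proof (intro set_eqI iffI)
    fix m assume "m \<in> {m. m < g \<and> is_eigenvalue sc D T m}"
    hence m: "m < g" "is_eigenvalue sc D T m" by auto
    have "\<not> 0 < m"
    proof
      assume "0 < m"
      moreover have "m < 1" using m gle[of 1] by simp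
      ultimately have "m \<in> P" using m by (simp add: P_def)
      thus False using gle[of m] m by simp
    qed
    thus "m \<in> {m. m \<le> 0 \<and> is_eigenvalue sc D T m}" using m by simp
  next
    fix m assume "m \<in> {m. m \<le> 0 \<and> is_eigenvalue sc D T m}"
    thus "m \<in> {m. m < g \<and> is_eigenvalue sc D T m}" using g0 by auto
  qed
  thus ?thesis using g0 by blast
qed

lemma count_le0: "(\<Sum>m\<in>{m. m \<le> 0 \<and> is_eigenvalue sc D T m}. eig_mult sc D T m) = nuc + eig_mult sc D T 0"
proof (cases "is_eigenvalue sc D T 0")
  case True
  have "{m. m \<le> 0 \<and> is_eigenvalue sc D T m} = insert 0 {m. m < 0 \<and> is_eigenvalue sc D T m}"
    using True by auto
  moreover have "finite {m. m < 0 \<and> is_eigenvalue sc D T m}" by (rule eigenvalues_finite)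
  ultimately show ?thesis by (simp add: nuc_def)
next
  case False
  have "{m. m \<le> 0 \<and> is_eigenvalue sc D T m} = {m. m < 0 \<and> is_eigenvalue sc D T m}"
    using False by (auto simp: order_le_less)
  thus ?thesis using not_eig_mult[OF False] by (simp add: nuc_def)
qed

lemma maxeig0_len: "maxeig 0 es \<Longrightarrow> length es = nuc"
  using maxeig_count[of 0 es] by (simp add: nuc_def)

lemma q_lincomb:
  assumes el: "eiglist g es"
  shows "q (lincomb c es) = (\<Sum>j<length es. (cmod (c j))\<^sup>2 * q (es!j))"
proof -
  have o: "orthonormal es" using el by (simp add: eiglist_def)
  have "q (lincomb c es) = Re (\<Sum>j<length es. c j * complex_of_real (q (es!j)) * cnj (c j))"
    by (simp add: q_def T_lincomb_eig[OF el] ip_lincomb_lincomb[OF o])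
  also have "\<dots> = (\<Sum>j<length es. (cmod (c j))\<^sup>2 * q (es!j))"
  proof (simp only: Re_sum, rule sum.cong[OF refl])
    fix j
    have cc: "c j * cnj (c j) = complex_of_real ((cmod (c j))\<^sup>2)" by (rule complex_norm_square[symmetric])
    have "c j * complex_of_real (q (es!j)) * cnj (c j) = (c j * cnj (c j)) * complex_of_real (q (es!j))"
      by (simp only: ac_simps)
    also have "\<dots> = complex_of_real ((cmod (c j))\<^sup>2 * q (es!j))" by (simp only: cc of_real_mult)
    finally have "c j * complex_of_real (q (es!j)) * cnj (c j) = complex_of_real ((cmod (c j))\<^sup>2 * q (es!j))" .
    hence "Re (c j * complex_of_real (q (es!j)) * cnj (c j)) = Re (complex_of_real ((cmod (c j))\<^sup>2 * q (es!j)))"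
      by (rule arg_cong)
    thus "Re (c j * complex_of_real (q (es!j)) * cnj (c j)) = (cmod (c j))\<^sup>2 * q (es!j)"
      by (simp only: Re_complex_of_real)
  qed
  finally show ?thesis .
qed

lemma lincomb_D: "eiglist g es \<Longrightarrow> lincomb c es \<in> D"
  using eiglist_D lincomb_in_subspace[OF subD] by blast

end

lemma abs_aux:
  fixes a1 a2 b1 b2 s :: real
  assumes "0 \<le> s"
  shows "\<bar>(a1 - s * b1) - (a2 - s * b2)\<bar> \<le> \<bar>a1 - a2\<bar> + s * \<bar>b1 - b2\<bar>"
proof -
  have "(a1 - s * b1) - (a2 - s * b2) = (a1 - a2) - s * (b1 - b2)" by (simp add: algebra_simps)
  hence "\<bar>(a1 - s * b1) - (a2 - s * b2)\<bar> \<le> \<bar>a1 - a2\<bar> + \<bar>s * (b1 - b2)\<bar>"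
    using abs_triangle_ineq4[of "a1 - a2" "s * (b1 - b2)"] by simp
  thus ?thesis using assms by (simp add: abs_mult)
qed

lemma Q_perturb:
  assumes S1: "sa_op sc ip D1 T1 m1" and S2: "sa_op sc ip D2 T2 m2" and s: "0 \<le> s"
  shows "\<bar>sa_op.Q sc ip D1 T1 s y - sa_op.Q sc ip D2 T2 s y\<bar>
     \<le> (2 + s) * onorm (\<lambda>y. resolvent sc D1 T1 \<i> y - resolvent sc D2 T2 \<i> y) * (norm y)\<^sup>2"
proof -
  interpret A: sa_op sc ip D1 T1 m1 by (rule S1)
  interpret B: sa_op sc ip D2 T2 m2 by (rule S2)
  define \<rho> where "\<rho> = onorm (\<lambda>y. resolvent sc D1 T1 \<i> y - resolvent sc D2 T2 \<i> y)"
  have bl: "bounded_linear (\<lambda>y. A.R y - B.R y)"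
    by (intro bounded_linear_sub A.bounded_linear_R B.bounded_linear_R)
  have \<Delta>: "norm (A.R y - B.R y) \<le> \<rho> * norm y"
    using onorm[OF bl, of y] by (simp add: \<rho>_def A.R_def B.R_def)
  have na: "norm (A.R y) \<le> norm y" and nb: "norm (B.R y) \<le> norm y" by (rule A.R_norm, rule B.R_norm)
  have fac: "(norm (A.R y))\<^sup>2 - (norm (B.R y))\<^sup>2 = (norm (A.R y) - norm (B.R y)) * (norm (A.R y) + norm (B.R y))"
    by (simp add: power2_eq_square algebra_simps)
  have "\<bar>(norm (A.R y))\<^sup>2 - (norm (B.R y))\<^sup>2\<bar> = \<bar>norm (A.R y) - norm (B.R y)\<bar> * \<bar>norm (A.R y) + norm (B.R y)\<bar>"
    unfolding fac by (rule abs_mult)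
  also have "\<bar>norm (A.R y) + norm (B.R y)\<bar> = norm (A.R y) + norm (B.R y)" by simp
  finally have "\<bar>(norm (A.R y))\<^sup>2 - (norm (B.R y))\<^sup>2\<bar> = \<bar>norm (A.R y) - norm (B.R y)\<bar> * (norm (A.R y) + norm (B.R y))" .
  also have "\<dots> \<le> (\<rho> * norm y) * (2 * norm y)"
  proof (rule mult_mono)
    show "\<bar>norm (A.R y) - norm (B.R y)\<bar> \<le> \<rho> * norm y"
      using norm_triangle_ineq3[of "A.R y" "B.R y"] \<Delta> by simp
    show "norm (A.R y) + norm (B.R y) \<le> 2 * norm y" using na nb by simp
    show "0 \<le> \<rho> * norm y" using \<Delta> norm_ge_zero order.trans by blast
  qed simp
  finally have t1: "\<bar>(norm (A.R y))\<^sup>2 - (norm (B.R y))\<^sup>2\<bar> \<le> 2 * \<rho> * (norm y)\<^sup>2"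
    by (simp add: power2_eq_square algebra_simps)
  have "\<bar>Re (ip (A.R y) y) - Re (ip (B.R y) y)\<bar> = \<bar>Re (ip (A.R y - B.R y) y)\<bar>" by (simp add: A.ip_diff_left)
  also have "\<dots> \<le> norm (A.R y - B.R y) * norm y" by (rule A.abs_Re_ip_le)
  also have "\<dots> \<le> \<rho> * norm y * norm y" using \<Delta> by (intro mult_right_mono) auto
  finally have t2: "\<bar>Re (ip (A.R y) y) - Re (ip (B.R y) y)\<bar> \<le> \<rho> * (norm y)\<^sup>2" by (simp add: power2_eq_square)
  have "\<bar>A.Q s y - B.Q s y\<bar> \<le> \<bar>(norm (A.R y))\<^sup>2 - (norm (B.R y))\<^sup>2\<bar> + s * \<bar>Re (ip (A.R y) y) - Re (ip (B.R y) y)\<bar>"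
    unfolding A.Q_def B.Q_def by (rule abs_aux[OF s])
  also have "\<dots> \<le> 2 * \<rho> * (norm y)\<^sup>2 + s * (\<rho> * (norm y)\<^sup>2)" using t1 t2 s by (intro add_mono mult_left_mono) auto
  finally show ?thesis by (simp add: \<rho>_def algebra_simps)
qed


locale mainctx = chs sc ip for sc :: "complex \<Rightarrow> 'h::banach \<Rightarrow> 'h" and ip +
  fixes \<sigma> \<tau> :: ereal and D :: "real \<Rightarrow> 'h set" and T :: "real \<Rightarrow> 'h \<Rightarrow> 'h"
    and Df :: "'h set" and f :: "real \<Rightarrow> 'h \<Rightarrow> real"
  assumes standing: "standing_assumptions sc ip \<sigma> \<tau> D T"
    and closure_form: "\<And>l. \<sigma> < ereal l \<Longrightarrow> ereal l < \<tau> \<Longrightarrow>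
           is_form_closure (D l) (\<lambda>y. Re (ip (T l y) y)) Df (f l)"
    and monotone: "\<And>l1 l2 y. \<sigma> < ereal l1 \<Longrightarrow> l1 < l2 \<Longrightarrow> ereal l2 < \<tau> \<Longrightarrow>
           y \<in> Df \<Longrightarrow> y \<noteq> 0 \<Longrightarrow> f l1 y - f l2 y > 0"
begin

definition I where "I = {l. \<sigma> < ereal l \<and> ereal l < \<tau>}"

lemma A1: "l \<in> I \<Longrightarrow> self_adjoint sc ip (D l) (T l) \<and> compact_resolvent sc (D l) (T l)"
  using standing unfolding standing_assumptions_def Let_def I_def by blast

lemma A2: "l0 \<in> I \<Longrightarrow> \<exists>mu U. open U \<and> l0 \<in> U \<and> U \<subseteq> I \<and>
    (\<forall>l\<in>U. \<forall>x\<in>D l. 0 \<le> Re (ip (T l x - sc (complex_of_real mu) x) x))"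
proof -
  assume l0: "l0 \<in> I"
  obtain mu U where "open U" "l0 \<in> U" "closure U \<subseteq> I"
      "\<forall>l1\<in>U. \<forall>x\<in>D l1. 0 \<le> Re (ip (T l1 x - sc (complex_of_real mu) x) x)"
    using standing l0 unfolding standing_assumptions_def Let_def I_def by blast
  moreover have "U \<subseteq> I" using \<open>closure U \<subseteq> I\<close> closure_subset by blast
  ultimately show ?thesis by blast
qed

lemma A3: "l0 \<in> I \<Longrightarrow> ((\<lambda>l. onorm (\<lambda>y. resolvent sc (D l) (T l) \<i> y - resolvent sc (D l0) (T l0) \<i> y))
                \<longlongrightarrow> 0) (at l0 within I)"
  using standing unfolding standing_assumptions_def Let_def I_def by blast

lemma sa_U: "l0 \<in> I \<Longrightarrow> \<exists>mu U. open U \<and> l0 \<in> U \<and> U \<subseteq> I \<and> (\<forall>l\<in>U. sa_op sc ip (D l) (T l) mu)"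
proof -
  assume l0: "l0 \<in> I"
  obtain mu U where U: "open U" "l0 \<in> U" "U \<subseteq> I"
    "\<forall>l\<in>U. \<forall>x\<in>D l. 0 \<le> Re (ip (T l x - sc (complex_of_real mu) x) x)"
    using A2[OF l0] by blast
  have "sa_op sc ip (D l) (T l) mu" if l: "l \<in> U" for l
  proof -
    have "l \<in> I" using U l by blast
    thus ?thesis unfolding sa_op_def sa_op_axioms_def using chs_axioms A1 U(4) l by blast
  qed
  thus ?thesis using U by blast
qed

lemma sa_at: "l \<in> I \<Longrightarrow> \<exists>mu. sa_op sc ip (D l) (T l) mu"
  using sa_U by blast

abbreviation nu where "nu l \<equiv> nu_F sc D T l"
abbreviation kap where "kap l \<equiv> eig_mult sc (D l) (T l) 0"

lemma nu_nuc: "sa_op sc ip (D l) (T l) mu \<Longrightarrow> nu l = sa_op.nuc sc (D l) (T l)"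
proof -
  assume S: "sa_op sc ip (D l) (T l) mu"
  interpret S: sa_op sc ip "D l" "T l" mu by (rule S)
  show ?thesis by (simp add: nu_F_def S.nuc_def)
qed

lemma fc_at: "l \<in> I \<Longrightarrow> sa_op sc ip (D l) (T l) mu \<Longrightarrow> is_form_closure (D l) (sa_op.q ip (T l)) Df (f l)"
proof -
  assume l: "l \<in> I" and S: "sa_op sc ip (D l) (T l) mu"
  interpret S: sa_op sc ip "D l" "T l" mu by (rule S)
  show ?thesis unfolding S.q_eq using closure_form l by (simp add: I_def)
qed

lemma M1:
  assumes l1: "l1 \<in> I" and l2: "l2 \<in> I" and lt: "l1 < l2"
  shows "nu l1 + kap l1 \<le> nu l2"
proof (rule ccontr)
  assume "\<not> nu l1 + kap l1 \<le> nu l2"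
  hence lt2: "nu l2 < nu l1 + kap l1" by simp
  obtain mu1 where S1: "sa_op sc ip (D l1) (T l1) mu1" using sa_at[OF l1] by blast
  obtain mu2 where S2: "sa_op sc ip (D l2) (T l2) mu2" using sa_at[OF l2] by blast
  interpret S1: sa_op sc ip "D l1" "T l1" mu1 by (rule S1)
  interpret S2: sa_op sc ip "D l2" "T l2" mu2 by (rule S2)
  obtain g where g: "g > 0" "{m. m < g \<and> is_eigenvalue sc (D l1) (T l1) m} = {m. m \<le> 0 \<and> is_eigenvalue sc (D l1) (T l1) m}"
    using S1.gap_ex by blast
  obtain es where me: "S1.maxeig g es" using S1.maxeig_ex by blast
  have el: "S1.eiglist g es" and o: "orthonormal es" using me by (auto simp: S1.maxeig_def S1.eiglist_def)
  have len: "length es = nu l1 + kap l1"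
    using S1.maxeig_count[OF me] g(2) S1.count_le0 nu_nuc[OF S1] by simp
  obtain es2 where me2: "S2.maxeig 0 es2" using S2.maxeig_ex by blast
  have len2: "length es2 = nu l2" using S2.maxeig0_len[OF me2] nu_nuc[OF S2] by simp
  obtain c where c: "lincomb c es \<noteq> 0" "orth es2 (lincomb c es)"
    using exists_orth_in_span[OF o, of es2] len len2 lt2 by auto
  define y where "y = lincomb c es"
  have yD: "y \<in> D l1" unfolding y_def by (rule S1.lincomb_D[OF el])
  have qle: "S1.q y \<le> 0"
  proof -
    have "S1.q (es!j) \<le> 0" if "j < length es" for j
    proof -
      have "S1.q (es!j) \<in> S1.q ` set es" using that by simp
      hence "S1.q (es!j) \<in> {m. m \<le> 0 \<and> is_eigenvalue sc (D l1) (T l1) m}"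
        using S1.maxeig_eigenvalues[OF me] g(2) by simp
      thus ?thesis by simp
    qed
    hence "(\<Sum>j<length es. (cmod (c j))\<^sup>2 * S1.q (es!j)) \<le> 0"
      by (intro sum_nonpos mult_nonneg_nonpos) auto
    thus ?thesis unfolding y_def S1.q_lincomb[OF el] .
  qed
  have fc1: "is_form_closure (D l1) S1.q Df (f l1)" by (rule fc_at[OF l1 S1])
  have fc2: "is_form_closure (D l2) S2.q Df (f l2)" by (rule fc_at[OF l2 S2])
  have yDf: "y \<in> Df" and f1: "f l1 y = S1.q y" using S1.form_on_D[OF fc1 yD] by auto
  have "f l1 y - f l2 y > 0" using monotone[of l1 l2 y] l1 l2 lt yDf c(1) by (simp add: I_def y_def)
  moreover have "0 * (norm y)\<^sup>2 \<le> f l2 y" using S2.form_variational[OF fc2 me2 yDf] c(2) by (simp add: y_def)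
  ultimately show False using f1 qle by simp
qed

lemma near:
  assumes l0: "l0 \<in> I"
  shows "\<exists>\<delta>>0. \<forall>l\<in>I. \<bar>l - l0\<bar> < \<delta> \<longrightarrow> nu l0 \<le> nu l \<and> nu l \<le> nu l0 + kap l0"
proof -
  obtain mu U where U: "open U" "l0 \<in> U" "U \<subseteq> I" "\<And>l. l \<in> U \<Longrightarrow> sa_op sc ip (D l) (T l) mu"
    using sa_U[OF l0] by blast
  define s where "s = \<bar>mu\<bar> + 1"
  have s0: "0 < s" "0 \<le> s" and smu: "- s < mu" by (auto simp: s_def)
  have S0: "sa_op sc ip (D l0) (T l0) mu" by (rule U(4)[OF U(2)])
  interpret S0: sa_op sc ip "D l0" "T l0" mu by (rule S0)
  obtain es0 where me0: "S0.maxeig 0 es0" using S0.maxeig_ex by blast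
  have el0: "S0.eiglist 0 es0" and o0: "orthonormal es0" using me0 by (auto simp: S0.maxeig_def S0.eiglist_def)
  have len0: "length es0 = nu l0" using S0.maxeig0_len[OF me0] nu_nuc[OF S0] by simp
  have "- s < S0.q e" if "e \<in> set es0" for e using S0.eiglist_lb[OF el0 that] smu by simp
  then obtain \<delta>0 where \<delta>0: "\<delta>0 > 0" "\<And>c. (1 + \<delta>0) * (norm (lincomb c es0))\<^sup>2 \<le> S0.Q s (lincomb c es0)"
    using S0.Q_neg_span[OF el0] by blast
  obtain g where g: "g > 0" "{m. m < g \<and> is_eigenvalue sc (D l0) (T l0) m} = {m. m \<le> 0 \<and> is_eigenvalue sc (D l0) (T l0) m}"
    using S0.gap_ex by blast
  obtain es1 where me1: "S0.maxeig g es1" using S0.maxeig_ex by blast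
  have len1: "length es1 = nu l0 + kap l0"
    using S0.maxeig_count[OF me1] g(2) S0.count_le0 nu_nuc[OF S0] by simp
  define \<delta>1 where "\<delta>1 = min (s * g) 1"
  have \<delta>1: "\<delta>1 > 0" using s0 g by (simp add: \<delta>1_def)
  have gap: "S0.Q s y \<le> (1 - \<delta>1) * (norm y)\<^sup>2" if "orth es1 y" for y
    unfolding \<delta>1_def by (rule S0.Q_gap[OF me1 that g(1) s0(1)])
  define \<epsilon> where "\<epsilon> = min \<delta>0 \<delta>1 / (2 + s)"
  have \<epsilon>: "\<epsilon> > 0" using \<delta>0 \<delta>1 s0 by (simp add: \<epsilon>_def)
  have "\<forall>\<^sub>F l in at l0 within I. onorm (\<lambda>y. resolvent sc (D l) (T l) \<i> y - resolvent sc (D l0) (T l0) \<i> y) < \<epsilon>"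
    using order_tendstoD(2)[OF A3[OF l0] \<epsilon>] .
  then obtain d1 where d1: "d1 > 0" "\<And>l. l \<in> I \<Longrightarrow> l \<noteq> l0 \<Longrightarrow> dist l l0 < d1 \<Longrightarrow>
      onorm (\<lambda>y. resolvent sc (D l) (T l) \<i> y - resolvent sc (D l0) (T l0) \<i> y) < \<epsilon>"
    unfolding eventually_at by blast
  obtain d2 where d2: "d2 > 0" "ball l0 d2 \<subseteq> U" using U(1,2) open_contains_ball by blast
  define \<delta> where "\<delta> = min d1 d2"
  have "nu l0 \<le> nu l \<and> nu l \<le> nu l0 + kap l0" if l: "l \<in> I" "\<bar>l - l0\<bar> < \<delta>" for l
  proof (cases "l = l0")
    case True thus ?thesis by simp
  next
    case False
    have lU: "l \<in> U" using d2 l by (auto simp: \<delta>_def dist_real_def abs_minus_commute)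
    have S: "sa_op sc ip (D l) (T l) mu" by (rule U(4)[OF lU])
    interpret S: sa_op sc ip "D l" "T l" mu by (rule S)
    define \<rho> where "\<rho> = onorm (\<lambda>y. resolvent sc (D l) (T l) \<i> y - resolvent sc (D l0) (T l0) \<i> y)"
    have \<rho>: "\<rho> < \<epsilon>" unfolding \<rho>_def using d1(2)[OF l(1) False] l by (simp add: \<delta>_def dist_real_def)
    have pert: "\<bar>S.Q s y - S0.Q s y\<bar> < min \<delta>0 \<delta>1 * (norm y)\<^sup>2" if "y \<noteq> 0" for y
    proof -
      have "\<bar>S.Q s y - S0.Q s y\<bar> \<le> (2 + s) * \<rho> * (norm y)\<^sup>2"
        unfolding \<rho>_def by (rule Q_perturb[OF S S0 s0(2)])
      also have "\<dots> < (2 + s) * \<epsilon> * (norm y)\<^sup>2"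
        using \<rho> s0 that by (intro mult_strict_right_mono mult_strict_left_mono) auto
      also have "(2 + s) * \<epsilon> = min \<delta>0 \<delta>1" using s0 by (simp add: \<epsilon>_def)
      finally show ?thesis .
    qed
    obtain es where me: "S.maxeig 0 es" using S.maxeig_ex by blast
    have el: "S.eiglist 0 es" and o: "orthonormal es" using me by (auto simp: S.maxeig_def S.eiglist_def)
    have len: "length es = nu l" using S.maxeig0_len[OF me] nu_nuc[OF S] by simp
    have A: "nu l0 \<le> nu l"
    proof (rule ccontr)
      assume "\<not> nu l0 \<le> nu l"
      then obtain c where c: "lincomb c es0 \<noteq> 0" "orth es (lincomb c es0)"
        using exists_orth_in_span[OF o0, of es] len len0 by auto
      define y where "y = lincomb c es0"
      have "S.Q s y \<le> (norm y)\<^sup>2" using S.Q_orth0[OF me _ s0(2)] c(2) by (simp add: y_def)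
      moreover have "(1 + \<delta>0) * (norm y)\<^sup>2 \<le> S0.Q s y" using \<delta>0(2) by (simp add: y_def)
      moreover have "\<bar>S.Q s y - S0.Q s y\<bar> < \<delta>0 * (norm y)\<^sup>2"
      proof -
        have "\<bar>S.Q s y - S0.Q s y\<bar> < min \<delta>0 \<delta>1 * (norm y)\<^sup>2" using pert c(1) by (simp add: y_def)
        also have "\<dots> \<le> \<delta>0 * (norm y)\<^sup>2" by (intro mult_right_mono) auto
        finally show ?thesis .
      qed
      ultimately show False by (simp add: algebra_simps)
    qed
    have B: "nu l \<le> nu l0 + kap l0"
    proof (rule ccontr)
      assume "\<not> nu l \<le> nu l0 + kap l0"
      then obtain c where c: "lincomb c es \<noteq> 0" "orth es1 (lincomb c es)"
        using exists_orth_in_span[OF o, of es1] len len1 by auto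
      define y where "y = lincomb c es"
      have "- s < S.q e" if "e \<in> set es" for e using S.eiglist_lb[OF el that] smu by simp
      then obtain \<delta>l where \<delta>l: "\<delta>l > 0" "\<And>c. (1 + \<delta>l) * (norm (lincomb c es))\<^sup>2 \<le> S.Q s (lincomb c es)"
        using S.Q_neg_span[OF el] by blast
      have "(norm y)\<^sup>2 \<le> S.Q s y"
      proof -
        have "0 \<le> \<delta>l * (norm y)\<^sup>2" using \<delta>l(1) by simp
        moreover have "(1 + \<delta>l) * (norm y)\<^sup>2 \<le> S.Q s y" using \<delta>l(2)[of c] by (simp add: y_def)
        ultimately show ?thesis by (simp add: algebra_simps)
      qed
      moreover have "S0.Q s y \<le> (1 - \<delta>1) * (norm y)\<^sup>2" using gap c(2) by (simp add: y_def)
      moreover have "\<bar>S.Q s y - S0.Q s y\<bar> < \<delta>1 * (norm y)\<^sup>2"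
      proof -
        have "\<bar>S.Q s y - S0.Q s y\<bar> < min \<delta>0 \<delta>1 * (norm y)\<^sup>2" using pert c(1) by (simp add: y_def)
        also have "\<dots> \<le> \<delta>1 * (norm y)\<^sup>2" by (intro mult_right_mono) auto
        finally show ?thesis .
      qed
      ultimately show False by (simp add: algebra_simps)
    qed
    show ?thesis using A B by simp
  qed
  moreover have "\<delta> > 0" using d1 d2 by (simp add: \<delta>_def)
  ultimately show ?thesis by blast
qed

end

context mainctx
begin

lemma I_interval: "a \<in> I \<Longrightarrow> b \<in> I \<Longrightarrow> a \<le> l \<Longrightarrow> l \<le> b \<Longrightarrow> l \<in> I"
proof -
  assume a: "a \<in> I" and b: "b \<in> I" and al: "a \<le> l" and lb: "l \<le> b"
  have "\<sigma> < ereal a" "ereal a \<le> ereal l" using a al by (auto simp: I_def)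
  hence "\<sigma> < ereal l" by (rule less_le_trans)
  moreover have "ereal l \<le> ereal b" "ereal b < \<tau>" using b lb by (auto simp: I_def)
  hence "ereal l < \<tau>" by (rule le_less_trans)
  ultimately show ?thesis by (simp add: I_def)
qed

lemma kap_pos: "l \<in> I \<Longrightarrow> is_eigenvalue sc (D l) (T l) 0 \<Longrightarrow> 1 \<le> kap l"
proof -
  assume l: "l \<in> I" and e: "is_eigenvalue sc (D l) (T l) 0"
  obtain mu where S: "sa_op sc ip (D l) (T l) mu" using sa_at[OF l] by blast
  interpret S: sa_op sc ip "D l" "T l" mu by (rule S)
  show ?thesis by (rule S.eig_mult_pos[OF e])
qed

lemma kap_zero: "l \<in> I \<Longrightarrow> \<not> is_eigenvalue sc (D l) (T l) 0 \<Longrightarrow> kap l = 0"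
proof -
  assume l: "l \<in> I" and e: "\<not> is_eigenvalue sc (D l) (T l) 0"
  obtain mu where S: "sa_op sc ip (D l) (T l) mu" using sa_at[OF l] by blast
  interpret S: sa_op sc ip "D l" "T l" mu by (rule S)
  show ?thesis by (rule S.not_eig_mult[OF e])
qed

lemma chain:
  assumes fin: "finite S" and a: "a \<in> I"
  shows "\<forall>b. b \<in> I \<and> a \<le> b \<and> S \<subseteq> {a..<b} \<longrightarrow> nu a + (\<Sum>l\<in>S. kap l) \<le> nu b"
  using fin
proof (induction S rule: finite_linorder_max_induct)
  case empty
  show ?case
  proof (intro allI impI)
    fix b assume b: "b \<in> I \<and> a \<le> b \<and> {} \<subseteq> {a..<b}"
    show "nu a + (\<Sum>l\<in>{}. kap l) \<le> nu b"
    proof (cases "a = b")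
      case True thus ?thesis by simp
    next
      case False
      hence "a < b" using b by simp
      thus ?thesis using M1[OF a] b by fastforce
    qed
  qed
next
  case (insert m A)
  show ?case
  proof (intro allI impI)
    fix b assume b: "b \<in> I \<and> a \<le> b \<and> insert m A \<subseteq> {a..<b}"
    have m: "a \<le> m" "m < b" using b by auto
    have mI: "m \<in> I" using I_interval[OF a _ m(1)] b m(2) by auto
    have "A \<subseteq> {a..<m}" using insert.hyps(2) b by auto
    hence "nu a + (\<Sum>l\<in>A. kap l) \<le> nu m" using insert.IH mI m(1) by blast
    moreover have "nu m + kap m \<le> nu b" using M1[OF mI _ m(2)] b by blast
    moreover have "m \<notin> A" using insert.hyps(2) by auto
    ultimately show "nu a + (\<Sum>l\<in>insert m A. kap l) \<le> nu b" using insert.hyps(1) by simp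
  qed
qed

lemma main_count:
  assumes x1: "x1 \<in> I" and x2: "x2 \<in> I" and lt: "x1 < x2"
  shows "nu x2 = nu x1 + N_F sc D T x1 x2"
proof -
  define E where "E = {l. x1 \<le> l \<and> l < x2 \<and> is_eigenvalue sc (D l) (T l) 0}"
  have EI: "l \<in> I" if "l \<in> E" for l using that I_interval[OF x1 x2, of l] by (auto simp: E_def)
  have finE: "finite E"
  proof -
    have "finite E \<and> card E \<le> nu x2"
    proof (rule finite_if_finite_subsets_card_bdd)
      fix G assume G: "G \<subseteq> E" "finite G"
      have "card G = (\<Sum>l\<in>G. 1)" by simp
      also have "\<dots> \<le> (\<Sum>l\<in>G. kap l)" using G EI kap_pos by (intro sum_mono) (auto simp: E_def)
      also have "\<dots> \<le> nu x1 + (\<Sum>l\<in>G. kap l)" by simp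
      also have "\<dots> \<le> nu x2"
      proof -
        have "G \<subseteq> {x1..<x2}" using G(1) by (auto simp: E_def)
        hence "x2 \<in> I \<and> x1 \<le> x2 \<and> G \<subseteq> {x1..<x2}" using x2 lt by simp
        thus ?thesis using chain[OF G(2) x1] by blast
      qed
      finally show "card G \<le> nu x2" .
    qed
    thus ?thesis by simp
  qed
  have NF: "N_F sc D T x1 x2 = (\<Sum>l\<in>E. kap l)" by (simp add: N_F_def E_def)
  have up: "nu x1 + (\<Sum>l\<in>E. kap l) \<le> nu x2"
  proof -
    have "E \<subseteq> {x1..<x2}" by (auto simp: E_def)
    hence "x2 \<in> I \<and> x1 \<le> x2 \<and> E \<subseteq> {x1..<x2}" using x2 lt by simp
    thus ?thesis using chain[OF finE x1] by blast
  qed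
  define SE where "SE t = (\<Sum>l\<in>{l\<in>E. l < t}. kap l)" for t
  have SE_mono: "SE t \<le> SE t'" if "t \<le> t'" for t t'
    unfolding SE_def using finE that by (intro sum_mono2) auto
  define P where "P t \<longleftrightarrow> nu t \<le> nu x1 + SE t" for t
  define A where "A = {t. x1 \<le> t \<and> t \<le> x2 \<and> \<not> P t}"
  have "A = {}"
  proof (rule ccontr)
    assume Ane: "A \<noteq> {}"
    have bdd: "bdd_below A" by (rule bdd_belowI[of _ x1]) (auto simp: A_def)
    define t where "t = Inf A"
    have tlow: "t \<le> a" if "a \<in> A" for a unfolding t_def by (rule cInf_lower[OF that bdd])
    have t1: "x1 \<le> t" unfolding t_def using Ane by (intro cInf_greatest) (auto simp: A_def)
    obtain a0 where a0: "a0 \<in> A" using Ane by blast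
    have t2: "t \<le> x2" using tlow[OF a0] a0 by (auto simp: A_def)
    have tI: "t \<in> I" using I_interval[OF x1 x2 t1 t2] .
    have below: "P u" if "x1 \<le> u" "u < t" for u
    proof (rule ccontr)
      assume "\<not> P u"
      hence "u \<in> A" using that t2 by (auto simp: A_def)
      thus False using tlow that by fastforce
    qed
    obtain \<delta> where \<delta>: "\<delta> > 0" "\<And>l. l \<in> I \<Longrightarrow> \<bar>l - t\<bar> < \<delta> \<Longrightarrow> nu t \<le> nu l \<and> nu l \<le> nu t + kap t"
      using near[OF tI] by blast
    show False
    proof (cases "P t")
      case False
      have "t \<noteq> x1" using False by (auto simp: P_def)
      hence tx1: "x1 < t" using t1 by simp
      define u where "u = max x1 (t - \<delta> / 2)"
      have u: "x1 \<le> u" "u < t" "\<bar>u - t\<bar> < \<delta>" using tx1 \<delta>(1) by (auto simp: u_def)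
      have uI: "u \<in> I" using I_interval[OF x1 x2 u(1)] u(2) t2 by simp
      have "nu t \<le> nu u" using \<delta>(2)[OF uI u(3)] by simp
      also have "\<dots> \<le> nu x1 + SE u" using below[OF u(1,2)] by (simp add: P_def)
      also have "\<dots> \<le> nu x1 + SE t" using SE_mono[of u t] u(2) by simp
      finally show False using False by (simp add: P_def)
    next
      case True
      have above: "P u" if u: "t < u" "u \<le> x2" "u < t + \<delta>" for u
      proof -
        have uI: "u \<in> I" using I_interval[OF x1 x2 _ u(2)] t1 u(1) by simp
        have "\<bar>u - t\<bar> < \<delta>" using u by simp
        hence "nu u \<le> nu t + kap t" using \<delta>(2)[OF uI] by simp
        also have "\<dots> \<le> nu x1 + SE t + kap t" using True by (simp add: P_def)
        finally have c1: "nu u \<le> nu x1 + SE t + kap t" .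
        have "SE t + kap t \<le> SE u"
        proof (cases "is_eigenvalue sc (D t) (T t) 0")
          case True
          have tE: "t \<in> E" using True t1 u by (simp add: E_def)
          have "{l\<in>E. l < u} = insert t {l\<in>E. l < t} \<union> {l\<in>E. t < l \<and> l < u}" using u tE by auto
          define B where "B = {l\<in>E. l < t}"
          define C where "C = {l\<in>E. t < l \<and> l < u}"
          have fB: "finite B" "finite C" using finE by (auto simp: B_def C_def)
          have eq: "{l\<in>E. l < u} = insert t B \<union> C" using u tE by (auto simp: B_def C_def)
          have "sum kap (insert t B \<union> C) = sum kap (insert t B) + sum kap C"
            using fB by (intro sum.union_disjoint) (auto simp: B_def C_def)
          also have "sum kap (insert t B) = kap t + sum kap B" using fB by (simp add: B_def)
          finally have "SE u = kap t + SE t + sum kap C" unfolding SE_def eq B_def by simp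
          thus ?thesis by simp
        next
          case False
          thus ?thesis using kap_zero[OF tI False] SE_mono[of t u] u(1) by simp
        qed
        thus ?thesis using c1 by (simp add: P_def)
      qed
      have "t + min \<delta> 1 \<le> a" if a: "a \<in> A" for a
      proof (rule ccontr)
        assume "\<not> t + min \<delta> 1 \<le> a"
        hence alt: "a < t + \<delta>" by simp
        have "t \<le> a" using tlow[OF a] .
        moreover have "a \<noteq> t" using True a by (auto simp: A_def)
        ultimately have "t < a" by simp
        hence "P a" using above alt a by (auto simp: A_def)
        thus False using a by (simp add: A_def)
      qed
      hence "t + min \<delta> 1 \<le> t" unfolding t_def using Ane by (intro cInf_greatest) (auto simp: t_def)
      thus False using \<delta>(1) by simp
    qed
  qed
  hence "P x2" using lt by (auto simp: A_def)
  moreover have "{l\<in>E. l < x2} = E" by (auto simp: E_def)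
  ultimately have "nu x2 \<le> nu x1 + (\<Sum>l\<in>E. kap l)" by (simp add: P_def SE_def)
  thus ?thesis using up NF by simp
qed

end

theorem theorem2:
  fixes sc :: "complex \<Rightarrow> 'h::banach \<Rightarrow> 'h"
    and ip :: "'h \<Rightarrow> 'h \<Rightarrow> complex"
    and \<sigma> \<tau> :: ereal
    and D :: "real \<Rightarrow> 'h set" and T :: "real \<Rightarrow> 'h \<Rightarrow> 'h"
    and Df :: "'h set" and f :: "real \<Rightarrow> 'h \<Rightarrow> real"
    and \<xi>1 \<xi>2 :: real
  assumes hilbert: "complex_hilbert sc ip"
    and standing: "standing_assumptions sc ip \<sigma> \<tau> D T"
    and closure_form: "\<And>l. \<sigma> < ereal l \<Longrightarrow> ereal l < \<tau> \<Longrightarrow>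
           is_form_closure (D l) (\<lambda>y. Re (ip (T l y) y)) Df (f l)"
    and monotone: "\<And>l1 l2 y. \<sigma> < ereal l1 \<Longrightarrow> l1 < l2 \<Longrightarrow> ereal l2 < \<tau> \<Longrightarrow>
           y \<in> Df \<Longrightarrow> y \<noteq> 0 \<Longrightarrow> f l1 y - f l2 y > 0"
    and xi: "\<sigma> < ereal \<xi>1" "\<xi>1 < \<xi>2" "ereal \<xi>2 < \<tau>"
  shows "int (N_F sc D T \<xi>1 \<xi>2) = int (nu_F sc D T \<xi>2) - int (nu_F sc D T \<xi>1)"
proof -
  interpret M: mainctx sc ip \<sigma> \<tau> D T Df f
    unfolding mainctx_def mainctx_axioms_def chs_def
    using hilbert standing closure_form monotone by blast
  have e12: "ereal \<xi>1 < ereal \<xi>2" using xi(2) by simp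
  have x1: "\<xi>1 \<in> M.I" using xi(1) less_trans[OF e12 xi(3)] by (simp add: M.I_def)
  have x2: "\<xi>2 \<in> M.I" using xi(3) less_trans[OF xi(1) e12] by (simp add: M.I_def)
  have "nu_F sc D T \<xi>2 = nu_F sc D T \<xi>1 + N_F sc D T \<xi>1 \<xi>2" by (rule M.main_count[OF x1 x2 xi(2)])
  thus ?thesis by simp
qed


end
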